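(* Let $(\mathbb{Z}_{(p_n)},+\mathbf{1})$ and $(\mathbb{Z}_{(q_n)},+\mathbf{1})$ be torsion free odometers with scales $(p_n)$ and $(q_n)$ respectively. If $\operatorname{Aut}^{(\infty)}(\mathbb{Z}_{(p_n)},+\mathbf{1})$ and $\operatorname{Aut}^{(\infty)}(\mathbb{Z}_{(q_n)},+\mathbf{1})$ are isomorphic as groups, then $\mathbb{Z}_{(p_n)}$ and $\mathbb{Z}_{(q_n)}$ are isomorphic as groups.
   Context: A scale is a sequence $(p_n)$ of positive integers with $p_n\mid p_{n+1}$, not eventually constant; the odometer is $\mathbb{Z}_{(p_n)}=\{(x_n)\in\prod_n\mathbb{Z}/p_n\mathbb{Z}: x_{n+1}\equiv x_n\bmod p_n\}$, and $+\mathbf{1}$ is translation by $\mathbf{1}=(1,1,\dots)$. For a prime $p$, $\nu_p(n)$ is the $p$-adic valuation and $\mathbf{v}_p((p_n))=\lim_n\nu_p(p_n)\in\mathbb{N}\cup\{0,\infty\}$. The odometer (or scale) is torsion free if $\mathbf{v}_p((p_n))\in\{0,\infty\}$ for every prime $p$. For a homeomorphism $T$ of a compact metric space $X$, $\operatorname{Aut}(X,T)$ is the group of homeomorphisms commuting with $T$ and $\operatorname{Aut}^{(\infty)}(X,T)=\bigcup_{n\ge1}\operatorname{Aut}(X,T^n)\subseteq\operatorname{Homeo}(X)$. *)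

theory Defs
  imports "HOL-Analysis.Analysis" "HOL-Algebra.Bij" "HOL-Library.Extended_Nat"
begin

definition is_scale :: "(nat \<Rightarrow> nat) \<Rightarrow> bool" where
  "is_scale p \<longleftrightarrow> (\<forall>n. 0 < p n) \<and> (\<forall>n. p n dvd p (Suc n)) \<and>
                   \<not> (\<exists>N. \<forall>n\<ge>N. p n = p N)"

text \<open>The odometer, elements of Z/p_n Z represented by residues in 0..<p_n.\<close>
definition odometer :: "(nat \<Rightarrow> nat) \<Rightarrow> (nat \<Rightarrow> nat) set" where
  "odometer p = {x. \<forall>n. x n < p n \<and> x (Suc n) mod p n = x n}"

definition odo_add :: "(nat \<Rightarrow> nat) \<Rightarrow> (nat \<Rightarrow> nat) \<Rightarrow> (nat \<Rightarrow> nat) \<Rightarrow> (nat \<Rightarrow> nat)" where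
  "odo_add p x y = (\<lambda>n. (x n + y n) mod p n)"

definition odo_one :: "(nat \<Rightarrow> nat) \<Rightarrow> (nat \<Rightarrow> nat)" where
  "odo_one p = (\<lambda>n. 1 mod p n)"

definition odo_group :: "(nat \<Rightarrow> nat) \<Rightarrow> (nat \<Rightarrow> nat) monoid" where
  "odo_group p = \<lparr>carrier = odometer p, monoid.mult = odo_add p, one = (\<lambda>n. 0)\<rparr>"

definition odo_plus1 :: "(nat \<Rightarrow> nat) \<Rightarrow> (nat \<Rightarrow> nat) \<Rightarrow> (nat \<Rightarrow> nat)" where
  "odo_plus1 p x = odo_add p x (odo_one p)"

text \<open>v_p((p_n)) = lim nu_r(p_n), a monotone limit, hence the supremum in enat.\<close>
definition scale_val :: "nat \<Rightarrow> (nat \<Rightarrow> nat) \<Rightarrow> enat" where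
  "scale_val r p = (SUP n. enat (multiplicity r (p n)))"

definition torsion_free :: "(nat \<Rightarrow> nat) \<Rightarrow> bool" where
  "torsion_free p \<longleftrightarrow> (\<forall>r. Factorial_Ring.prime r \<longrightarrow> scale_val r p \<in> {0, \<infinity>})"

text \<open>Homeo(X) inside the bijection group on X (product topology on nat => nat,
  nat discrete), and Aut^(infty)(X,T) = union of the Aut(X,T^n), n >= 1.\<close>
definition Aut_inf :: "('a::topological_space) set \<Rightarrow> ('a \<Rightarrow> 'a) \<Rightarrow> ('a \<Rightarrow> 'a) set" where
  "Aut_inf X T = {f \<in> Bij X. (\<exists>g. homeomorphism X X f g) \<and>
       (\<exists>n\<ge>1. \<forall>x\<in>X. f ((T ^^ n) x) = (T ^^ n) (f x))}"

definition Aut_inf_group :: "('a::topological_space) set \<Rightarrow> ('a \<Rightarrow> 'a) \<Rightarrow> ('a \<Rightarrow> 'a) monoid" where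
  "Aut_inf_group X T = (BijGroup X)\<lparr>carrier := Aut_inf X T\<rparr>"

end

theory Submission
  imports Defs
begin

lemma cont_local:
  fixes f :: "(nat \<Rightarrow> nat) \<Rightarrow> (nat \<Rightarrow> nat)"
  assumes "continuous_on S f" "x \<in> S"
  shows "\<exists>F. finite F \<and> (\<forall>z\<in>S. (\<forall>i\<in>F. z i = x i) \<longrightarrow> f z m = f x m)"
proof -
  define B where "B = {u::nat\<Rightarrow>nat. u m = f x m}"
  have "B = (\<lambda>u. u m) -` {f x m}" unfolding B_def by auto
  hence oB: "open B" by (metis continuous_on_product_coordinates open_discrete open_vimage)
  obtain A where A: "open A" "A \<inter> S = f -` B \<inter> S"
    using assms(1) oB unfolding continuous_on_open_invariant by blast
  have xA: "x \<in> A" using A assms(2) by (auto simp: B_def)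
  have "openin (product_topology (\<lambda>i. euclidean) UNIV) A" using A(1) unfolding open_fun_def .
  from product_topology_open_contains_basis[OF this xA]
  obtain X where X: "x \<in> (\<Pi>\<^sub>E i\<in>UNIV. X i)" "\<forall>i. openin euclidean (X i)"
     "finite {i. X i \<noteq> topspace euclidean}" "(\<Pi>\<^sub>E i\<in>UNIV. X i) \<subseteq> A" by blast
  show ?thesis
  proof (intro exI conjI ballI impI)
    show "finite {i. X i \<noteq> UNIV}" using X(3) by simp
    fix z assume z: "z \<in> S" "\<forall>i\<in>{i. X i \<noteq> UNIV}. z i = x i"
    have "z \<in> (\<Pi>\<^sub>E i\<in>UNIV. X i)"
    proof -
      have "\<forall>i. z i \<in> X i" using z(2) X(1) by (metis (mono_tags, lifting) PiE_iff UNIV_I iso_tuple_UNIV_I mem_Collect_eq)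
      thus ?thesis by (simp add: PiE_iff)
    qed
    hence "z \<in> A" using X(4) by blast
    thus "f z m = f x m" using A(2) z(1) by (auto simp: B_def)
  qed
qed

lemma cont_coord_dep:
  fixes f :: "(nat \<Rightarrow> nat) \<Rightarrow> (nat \<Rightarrow> nat)"
  assumes "\<And>n. \<exists>N. \<forall>x\<in>S. \<forall>y\<in>S. x N = y N \<longrightarrow> f x n = f y n"
  shows "continuous_on S f"
proof (rule continuous_on_coordinatewise_then_product)
  fix n
  obtain N where N: "\<forall>x\<in>S. \<forall>y\<in>S. x N = y N \<longrightarrow> f x n = f y n" using assms by blast
  define G where "G = (\<lambda>a::nat. f (SOME y. y \<in> S \<and> y N = a) n)"
  have "\<forall>x\<in>S. f x n = G (x N)"
  proof
    fix x assume x: "x \<in> S"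
    hence "\<exists>y. y \<in> S \<and> y N = x N" by blast
    hence "(SOME y. y \<in> S \<and> y N = x N) \<in> S \<and> (SOME y. y \<in> S \<and> y N = x N) N = x N"
      by (rule someI_ex)
    thus "f x n = G (x N)" unfolding G_def using N x by metis
  qed
  moreover have "continuous_on S (\<lambda>x. G (x N))"
    using continuous_on_compose2[of UNIV G S "\<lambda>x. x N"] by (simp add: continuous_on_subset[OF continuous_on_product_coordinates])
  ultimately show "continuous_on S (\<lambda>x. f x n)" using continuous_on_cong by (smt (verit))
qed

definition iota :: "(nat \<Rightarrow> nat) \<Rightarrow> nat \<Rightarrow> (nat \<Rightarrow> nat)" where
  "iota p i = (\<lambda>n. i mod p n)"

definition trn :: "(nat \<Rightarrow> nat) \<Rightarrow> (nat \<Rightarrow> nat) \<Rightarrow> (nat \<Rightarrow> nat) \<Rightarrow> (nat \<Rightarrow> nat)" where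
  "trn p a x = (\<lambda>n. (x n + a n) mod p n)"

definition ngt :: "(nat \<Rightarrow> nat) \<Rightarrow> (nat \<Rightarrow> nat) \<Rightarrow> (nat \<Rightarrow> nat)" where
  "ngt p a = (\<lambda>n. (p n - a n) mod p n)"

lemma mono_bounded_const:
  fixes f :: "nat \<Rightarrow> nat"
  assumes "\<And>n. f n \<le> f (Suc n)" "\<And>n. f n \<le> B"
  shows "\<exists>N. \<forall>n\<ge>N. f n = f N"
proof -
  have fin: "finite (range f)" using assms(2) by (meson finite_atMost finite_subset image_subsetI atMost_iff)
  obtain N where N: "f N = Max (range f)" using Max_in[OF fin] by auto
  have mono: "mono f" using assms(1) by (simp add: mono_iff_le_Suc)
  show ?thesis
  proof (intro exI allI impI)
    fix n assume "N \<le> n"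
    hence "f N \<le> f n" using mono by (simp add: monoD)
    moreover have "f n \<le> f N" using N fin by simp
    ultimately show "f n = f N" by simp
  qed
qed

lemma comm_iter:
  assumes "\<forall>z\<in>X. f (F z) = F (f z)" "F ` X \<subseteq> X"
  shows "\<forall>z\<in>X. f ((F ^^ n) z) = (F ^^ n) (f z)"
proof (induction n)
  case 0 then show ?case by simp
next
  case (Suc n)
  have inX: "z \<in> X \<Longrightarrow> (F ^^ n) z \<in> X" for z
    by (induction n) (use assms(2) in auto)
  show ?case using Suc assms(1) inX by simp
qed

lemma funpow_in: "F ` X \<subseteq> X \<Longrightarrow> z \<in> X \<Longrightarrow> (F ^^ n) z \<in> X"
  by (induction n) auto

lemma Aut_inf_subgroup:
  fixes X :: "'a::topological_space set"
  assumes TX: "T ` X \<subseteq> X"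
  shows "subgroup (Aut_inf X T) (BijGroup X)"
proof (rule group.subgroupI[OF group_BijGroup])
  show "Aut_inf X T \<subseteq> carrier (BijGroup X)" unfolding Aut_inf_def BijGroup_def by auto
next
  have "(\<lambda>x\<in>X. x) \<in> Aut_inf X T"
    unfolding Aut_inf_def
  proof (intro CollectI conjI exI)
    show "(\<lambda>x\<in>X. x) \<in> Bij X" by (rule id_Bij)
    show "homeomorphism X X (\<lambda>x\<in>X. x) (\<lambda>x. x)"
      by (rule homeomorphism_cong[OF homeomorphism_ident]) auto
    show "(1::nat) \<le> 1" by simp
    show "\<forall>x\<in>X. (\<lambda>x\<in>X. x) ((T ^^ 1) x) = (T ^^ 1) ((\<lambda>x\<in>X. x) x)" using TX by auto
  qed
  thus "Aut_inf X T \<noteq> {}" by blast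
next
  fix a assume a: "a \<in> Aut_inf X T"
  then obtain g n where ab: "a \<in> Bij X" and hg: "homeomorphism X X a g" and n: "n \<ge> 1"
    and cm: "\<forall>x\<in>X. a ((T ^^ n) x) = (T ^^ n) (a x)"
    unfolding Aut_inf_def by blast
  have bij: "bij_betw a X X" using ab unfolding Bij_def by blast
  have inv: "inv\<^bsub>BijGroup X\<^esub> a = (\<lambda>x\<in>X. inv_into X a x)" using inv_BijGroup[OF ab] .
  have ginv: "\<And>y. y \<in> X \<Longrightarrow> inv_into X a y = g y"
    using hg bij unfolding homeomorphism_def
    by (metis bij_betw_inv_into_left image_eqI)
  show "inv\<^bsub>BijGroup X\<^esub> a \<in> Aut_inf X T"
    unfolding inv Aut_inf_def
  proof (intro CollectI conjI exI)
    show "(\<lambda>x\<in>X. inv_into X a x) \<in> Bij X" by (rule restrict_inv_into_Bij[OF ab])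
    show "homeomorphism X X (\<lambda>x\<in>X. inv_into X a x) a"
      by (rule homeomorphism_cong[OF homeomorphism_symD[OF hg]]) (auto simp: ginv)
    show "n \<ge> 1" by fact
    show "\<forall>x\<in>X. (\<lambda>x\<in>X. inv_into X a x) ((T ^^ n) x) = (T ^^ n) ((\<lambda>x\<in>X. inv_into X a x) x)"
    proof
      fix x assume x: "x \<in> X"
      define w where "w = inv_into X a x"
      have w: "w \<in> X" "a w = x" using bij x unfolding w_def
        by (auto simp: bij_betw_def inv_into_into f_inv_into_f)
      have Tw: "(T ^^ n) w \<in> X" "(T ^^ n) x \<in> X" using funpow_in[OF TX] w x by auto
      have "a ((T ^^ n) w) = (T ^^ n) x" using cm w by simp
      hence "inv_into X a ((T ^^ n) x) = (T ^^ n) w"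
        using bij Tw by (metis bij_betw_inv_into_left)
      thus "(\<lambda>x\<in>X. inv_into X a x) ((T ^^ n) x) = (T ^^ n) ((\<lambda>x\<in>X. inv_into X a x) x)"
        using x Tw w_def by simp
    qed
  qed
next
  fix a b assume a: "a \<in> Aut_inf X T" and b: "b \<in> Aut_inf X T"
  then obtain ga na where ab: "a \<in> Bij X" and hga: "homeomorphism X X a ga" and na: "na \<ge> 1"
    and cma: "\<forall>x\<in>X. a ((T ^^ na) x) = (T ^^ na) (a x)"
    unfolding Aut_inf_def by blast
  obtain gb nb where bb: "b \<in> Bij X" and hgb: "homeomorphism X X b gb" and nb: "nb \<ge> 1"
    and cmb: "\<forall>x\<in>X. b ((T ^^ nb) x) = (T ^^ nb) (b x)"
    using b unfolding Aut_inf_def by blast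
  have mult: "a \<otimes>\<^bsub>BijGroup X\<^esub> b = compose X a b" using ab bb by (simp add: BijGroup_def)
  have bX: "\<And>x. x \<in> X \<Longrightarrow> b x \<in> X" using Bij_imp_funcset[OF bb] by (simp add: Pi_iff)
  have TnX: "(T ^^ nb) ` X \<subseteq> X" "(T ^^ na) ` X \<subseteq> X" using funpow_in[OF TX] by auto
  have ca: "\<forall>z\<in>X. a (((T ^^ na) ^^ nb) z) = ((T ^^ na) ^^ nb) (a z)"
    by (rule comm_iter[OF cma TnX(2)])
  have cb: "\<forall>z\<in>X. b (((T ^^ nb) ^^ na) z) = ((T ^^ nb) ^^ na) (b z)"
    by (rule comm_iter[OF cmb TnX(1)])
  have e1: "(T ^^ na) ^^ nb = T ^^ (na * nb)" by (simp add: funpow_mult)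
  have e2: "(T ^^ nb) ^^ na = T ^^ (na * nb)" by (simp add: funpow_mult mult.commute)
  show "a \<otimes>\<^bsub>BijGroup X\<^esub> b \<in> Aut_inf X T"
    unfolding mult Aut_inf_def
  proof (intro CollectI conjI exI)
    show "compose X a b \<in> Bij X" by (rule compose_Bij[OF ab bb])
    show "homeomorphism X X (compose X a b) (gb \<circ> ga)"
      by (rule homeomorphism_cong[OF homeomorphism_compose[OF hgb hga]]) (auto simp: compose_def)
    show "na * nb \<ge> 1" using na nb by simp
    show "\<forall>x\<in>X. compose X a b ((T ^^ (na * nb)) x) = (T ^^ (na * nb)) (compose X a b x)"
    proof
      fix x assume x: "x \<in> X"
      have Tx: "(T ^^ (na * nb)) x \<in> X" using funpow_in[OF TX] x by blast
      have "compose X a b ((T ^^ (na * nb)) x) = a (b ((T ^^ (na * nb)) x))" using Tx by (simp add: compose_def)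
      also have "... = a ((T ^^ (na * nb)) (b x))" using cb x e2 by simp
      also have "... = (T ^^ (na * nb)) (a (b x))" using ca bX[OF x] e1 by simp
      finally show "compose X a b ((T ^^ (na * nb)) x) = (T ^^ (na * nb)) (compose X a b x)"
        using x by (simp add: compose_def)
    qed
  qed
qed

lemma Aut_inf_group_group:
  fixes X :: "'a::topological_space set"
  assumes TX: "T ` X \<subseteq> X"
  shows "group (Aut_inf_group X T)"
  unfolding Aut_inf_group_def
  by (rule subgroup.subgroup_is_group[OF Aut_inf_subgroup[OF TX] group_BijGroup])

lemma Aut_inf_mult:
  "f \<in> carrier (Aut_inf_group X T) \<Longrightarrow> g \<in> carrier (Aut_inf_group X T) \<Longrightarrow>
   f \<otimes>\<^bsub>Aut_inf_group X T\<^esub> g = compose X f g"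
  unfolding Aut_inf_group_def Aut_inf_def BijGroup_def by auto

lemma Aut_inf_one: "\<one>\<^bsub>Aut_inf_group X T\<^esub> = (\<lambda>x\<in>X. x)"
  unfolding Aut_inf_group_def BijGroup_def by simp

lemma Aut_inf_pow:
  fixes X :: "'a::topological_space set"
  assumes "f \<in> carrier (Aut_inf_group X T)" and TX: "T ` X \<subseteq> X"
  shows "f [^]\<^bsub>Aut_inf_group X T\<^esub> (n::nat) = restrict (f ^^ n) X"
proof (induction n)
  case 0 then show ?case by (simp add: Aut_inf_one)
next
  case (Suc n)
  have fB: "f \<in> Bij X" using assms unfolding Aut_inf_group_def Aut_inf_def by simp
  have fe: "f \<in> extensional X" using fB by (simp add: Bij_def)
  have pc: "f [^]\<^bsub>Aut_inf_group X T\<^esub> n \<in> carrier (Aut_inf_group X T)"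
    using monoid.nat_pow_closed[OF group.is_monoid[OF Aut_inf_group_group[OF TX]] assms(1)] .
  have "f [^]\<^bsub>Aut_inf_group X T\<^esub> Suc n = f [^]\<^bsub>Aut_inf_group X T\<^esub> n \<otimes>\<^bsub>Aut_inf_group X T\<^esub> f"
    by (simp only: nat_pow_Suc)
  also have "... = compose X (f [^]\<^bsub>Aut_inf_group X T\<^esub> n) f"
    using Aut_inf_mult[OF pc assms(1)] .
  also have "... = compose X (restrict (f ^^ n) X) f" by (simp only: Suc.IH)
  also have "... = restrict (f ^^ Suc n) X"
  proof (rule ext)
    fix x
    show "compose X (restrict (f ^^ n) X) f x = restrict (f ^^ Suc n) X x"
    proof (cases "x \<in> X")
      case True
      hence "f x \<in> X" using Bij_imp_funcset[OF fB] by (simp add: Pi_iff)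
      thus ?thesis using True by (simp add: compose_def funpow_Suc_right del: funpow.simps)
    qed (simp add: compose_def)
  qed
  finally show ?case .
qed

section \<open>The group invariant\<close>

definition Phi :: "nat \<Rightarrow> ('g, 'b) monoid_scheme \<Rightarrow> bool" where
  "Phi r G \<longleftrightarrow> (\<exists>h\<in>carrier G. \<forall>u\<in>carrier G. \<forall>v\<in>carrier G.
      u \<otimes>\<^bsub>G\<^esub> (h [^]\<^bsub>G\<^esub> r) = (h [^]\<^bsub>G\<^esub> r) \<otimes>\<^bsub>G\<^esub> u \<longrightarrow>
      v \<otimes>\<^bsub>G\<^esub> (h [^]\<^bsub>G\<^esub> r) = (h [^]\<^bsub>G\<^esub> r) \<otimes>\<^bsub>G\<^esub> v \<longrightarrow>
      u \<otimes>\<^bsub>G\<^esub> v = v \<otimes>\<^bsub>G\<^esub> u)"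

lemma Phi_iso:
  assumes G: "group G" and H: "group H" and iso: "G \<cong> H" and P: "Phi r G"
  shows "Phi r H"
proof -
  obtain \<phi> where \<phi>: "\<phi> \<in> hom G H" "bij_betw \<phi> (carrier G) (carrier H)"
    using iso unfolding is_iso_def iso_def by blast
  obtain h where h: "h \<in> carrier G" and ab: "\<forall>u\<in>carrier G. \<forall>v\<in>carrier G.
      u \<otimes>\<^bsub>G\<^esub> (h [^]\<^bsub>G\<^esub> r) = (h [^]\<^bsub>G\<^esub> r) \<otimes>\<^bsub>G\<^esub> u \<longrightarrow>
      v \<otimes>\<^bsub>G\<^esub> (h [^]\<^bsub>G\<^esub> r) = (h [^]\<^bsub>G\<^esub> r) \<otimes>\<^bsub>G\<^esub> v \<longrightarrow>
      u \<otimes>\<^bsub>G\<^esub> v = v \<otimes>\<^bsub>G\<^esub> u" using P unfolding Phi_def by blast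
  let ?g = "h [^]\<^bsub>G\<^esub> r"
  have gc: "?g \<in> carrier G" by (rule monoid.nat_pow_closed[OF group.is_monoid[OF G] h])
  have pg: "\<phi> ?g = (\<phi> h) [^]\<^bsub>H\<^esub> r" using hom_nat_pow[OF \<phi>(1) h G H] .
  have mul: "\<And>a b. a \<in> carrier G \<Longrightarrow> b \<in> carrier G \<Longrightarrow> \<phi> (a \<otimes>\<^bsub>G\<^esub> b) = \<phi> a \<otimes>\<^bsub>H\<^esub> \<phi> b"
    using \<phi>(1) by (simp add: hom_mult)
  have cl: "\<And>a b. a \<in> carrier G \<Longrightarrow> b \<in> carrier G \<Longrightarrow> a \<otimes>\<^bsub>G\<^esub> b \<in> carrier G"
    using G by (simp add: monoid.m_closed group.is_monoid)
  have inj: "inj_on \<phi> (carrier G)" using \<phi>(2) by (simp add: bij_betw_def)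
  have comm: "\<And>a. a \<in> carrier G \<Longrightarrow> \<phi> a \<otimes>\<^bsub>H\<^esub> \<phi> ?g = \<phi> ?g \<otimes>\<^bsub>H\<^esub> \<phi> a \<Longrightarrow> a \<otimes>\<^bsub>G\<^esub> ?g = ?g \<otimes>\<^bsub>G\<^esub> a"
  proof -
    fix a assume a: "a \<in> carrier G" and e: "\<phi> a \<otimes>\<^bsub>H\<^esub> \<phi> ?g = \<phi> ?g \<otimes>\<^bsub>H\<^esub> \<phi> a"
    have "\<phi> (a \<otimes>\<^bsub>G\<^esub> ?g) = \<phi> (?g \<otimes>\<^bsub>G\<^esub> a)" using e mul a gc by simp
    thus "a \<otimes>\<^bsub>G\<^esub> ?g = ?g \<otimes>\<^bsub>G\<^esub> a" using inj cl a gc by (meson inj_onD)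
  qed
  show ?thesis unfolding Phi_def
  proof (intro bexI[of _ "\<phi> h"] ballI impI)
    show "\<phi> h \<in> carrier H" using \<phi>(2) h by (meson bij_betwE)
    fix u' v' assume u': "u' \<in> carrier H" and v': "v' \<in> carrier H"
      and cu: "u' \<otimes>\<^bsub>H\<^esub> \<phi> h [^]\<^bsub>H\<^esub> r = \<phi> h [^]\<^bsub>H\<^esub> r \<otimes>\<^bsub>H\<^esub> u'"
      and cv: "v' \<otimes>\<^bsub>H\<^esub> \<phi> h [^]\<^bsub>H\<^esub> r = \<phi> h [^]\<^bsub>H\<^esub> r \<otimes>\<^bsub>H\<^esub> v'"
    obtain u where u: "u \<in> carrier G" "\<phi> u = u'" using \<phi>(2) u' by (metis bij_betw_iff_bijections)
    obtain v where v: "v \<in> carrier G" "\<phi> v = v'" using \<phi>(2) v' by (metis bij_betw_iff_bijections)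
    have "u \<otimes>\<^bsub>G\<^esub> ?g = ?g \<otimes>\<^bsub>G\<^esub> u" using comm[OF u(1)] cu u(2) pg by simp
    moreover have "v \<otimes>\<^bsub>G\<^esub> ?g = ?g \<otimes>\<^bsub>G\<^esub> v" using comm[OF v(1)] cv v(2) pg by simp
    ultimately have "u \<otimes>\<^bsub>G\<^esub> v = v \<otimes>\<^bsub>G\<^esub> u" using ab u v by blast
    hence "\<phi> (u \<otimes>\<^bsub>G\<^esub> v) = \<phi> (v \<otimes>\<^bsub>G\<^esub> u)" by simp
    thus "u' \<otimes>\<^bsub>H\<^esub> v' = v' \<otimes>\<^bsub>H\<^esub> u'" using mul u v by simp
  qed
qed

lemma ar1a: fixes P A d :: int assumes "d dvd P"
  shows "(P - A) mod d = (d - A mod d) mod d"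
  by (metis assms dvd_imp_mod_0 mod_diff_cong mod_mod_trivial mod_self)

lemma ar1: fixes P A d :: nat assumes "d dvd P" "A < P" "0 < d"
  shows "((P - A) mod P) mod d = (d - A mod d) mod d"
proof (cases "A = 0")
  case True then show ?thesis using assms by simp
next
  case False
  hence e: "(P - A) mod P = P - A" using assms by simp
  have "int ((P - A) mod d) = (int P - int A) mod int d" using assms by (simp add: of_nat_mod of_nat_diff)
  moreover have "int ((d - A mod d) mod d) = (int d - int A mod int d) mod int d"
    by (metis mod_le_divisor of_nat_diff_if of_nat_mod assms(3))
  moreover have "(int P - int A) mod int d = (int d - int A mod int d) mod int d"
    using ar1a assms(1) by (simp add: int_dvd_int_iff)
  ultimately show ?thesis using e by simp
qed

lemma ar2: fixes x a m :: nat assumes "x < m" "a < m"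
  shows "((x + (m - a) mod m) mod m + a) mod m = x"
  by (metis add.assoc add.commute assms(1,2) le_add_diff_inverse2
    less_or_eq_imp_le mod_add_right_eq mod_add_self2 mod_if)

lemma ar3: fixes x a m :: nat assumes "x < m" "a < m"
  shows "((x + a) mod m + (m - a) mod m) mod m = x"
  by (metis add.assoc assms(1,2) le_add_diff_inverse less_or_eq_imp_le
    mod_add_eq mod_add_self2 mod_if)

lemma restrict_funpow: "f ` X \<subseteq> X \<Longrightarrow> x \<in> X \<Longrightarrow> (restrict f X ^^ j) x = (f ^^ j) x"
proof (induction j)
  case 0 then show ?case by simp
next
  case (Suc j)
  have "(f ^^ j) x \<in> X" using funpow_in[OF Suc(2,3)] .
  thus ?case using Suc by simp
qed

lemma lincong:
  fixes k P a b :: nat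
  assumes "0 < k" "b < P" "gcd k P dvd (a + P - b)"
  shows "\<exists>j. (b + k * j) mod P = a mod P"
proof -
  obtain x y where xy: "k * x = P * y + gcd k P" using bezout_nat[of k P] assms(1) by auto
  obtain t where t: "a + P - b = gcd k P * t" using assms(3) by (auto elim: dvdE)
  have "k * (x * t) = (k * x) * t" by simp
  also have "... = (P * y + gcd k P) * t" using xy by simp
  also have "... = P * (y * t) + gcd k P * t" by (simp add: algebra_simps)
  also have "... = P * (y * t) + (a + P - b)" using t by simp
  finally have "k * (x * t) = P * (y * t) + (a + P - b)" .
  hence "(b + k * (x * t)) mod P = (b + (a + P - b) + P * (y * t)) mod P" by (simp add: add_ac)
  also have "... = (b + (a + P - b)) mod P" by (rule mod_mult_self2)
  also have "... = (a + P) mod P" using assms(2) by simp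
  also have "... = a mod P" by simp
  finally show ?thesis by blast
qed

lemma modeq_dvd:
  fixes a b c P :: nat
  assumes "a mod c = b mod c" "b < P" "c dvd P"
  shows "c dvd (a + P - b)"
proof -
  have "(a + P) mod c = a mod c" using assms(3) by (auto elim: dvdE)
  hence "(a + P) mod c = b mod c" using assms(1) by simp
  thus ?thesis using mod_eq_dvd_iff_nat[of b "a + P" c] assms(2) by simp
qed

lemma inj_on_funpow:
  assumes "inj_on f S" "f ` S \<subseteq> S"
  shows "inj_on (f ^^ n) S"
proof (induction n)
  case 0 then show ?case by simp
next
  case (Suc n)
  have "(f ^^ n) ` S \<subseteq> S" using funpow_in[OF assms(2)] by blast
  hence "inj_on (f \<circ> (f ^^ n)) S" using comp_inj_on[OF Suc] assms(1) by (meson inj_on_subset)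
  thus ?case by (simp only: funpow.simps(2))
qed

lemma Aut_comm:
  assumes "u \<in> carrier (Aut_inf_group X T)" "v \<in> carrier (Aut_inf_group X T)"
  shows "(u \<otimes>\<^bsub>Aut_inf_group X T\<^esub> v = v \<otimes>\<^bsub>Aut_inf_group X T\<^esub> u) \<longleftrightarrow> (\<forall>x\<in>X. u (v x) = v (u x))"
proof -
  have "u \<otimes>\<^bsub>Aut_inf_group X T\<^esub> v = compose X u v" using Aut_inf_mult[OF assms] .
  moreover have "v \<otimes>\<^bsub>Aut_inf_group X T\<^esub> u = compose X v u" using Aut_inf_mult[OF assms(2,1)] .
  moreover have "(compose X u v = compose X v u) \<longleftrightarrow> (\<forall>x\<in>X. u (v x) = v (u x))"
    unfolding compose_def
  proof
    assume eq: "(\<lambda>x\<in>X. u (v x)) = (\<lambda>x\<in>X. v (u x))"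
    show "\<forall>x\<in>X. u (v x) = v (u x)"
    proof
      fix x assume "x \<in> X"
      thus "u (v x) = v (u x)" using fun_cong[OF eq, of x] by simp
    qed
  next
    assume "\<forall>x\<in>X. u (v x) = v (u x)"
    thus "(\<lambda>x\<in>X. u (v x)) = (\<lambda>x\<in>X. v (u x))" by (intro restrict_ext) simp
  qed
  ultimately show ?thesis by simp
qed

context
  fixes p :: "nat \<Rightarrow> nat"
  assumes sc: "is_scale p"
begin

lemma pos: "0 < p n" using sc unfolding is_scale_def by blast

lemma dvd_mono: "n \<le> m \<Longrightarrow> p n dvd p m"
proof (induction m)
  case 0 then show ?case by simp
next
  case (Suc m)
  show ?case
  proof (cases "n = Suc m")
    case False
    hence "p n dvd p m" using Suc by simp
    moreover have "p m dvd p (Suc m)" using sc unfolding is_scale_def by blast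
    ultimately show ?thesis by (rule dvd_trans)
  qed simp
qed

lemma le_mono: "n \<le> m \<Longrightarrow> p n \<le> p m"
  using dvd_mono pos by (simp add: dvd_imp_le)

lemma unbounded: "\<exists>n. c < p n"
proof (rule ccontr)
  assume "\<not> (\<exists>n. c < p n)"
  hence "\<And>n. p n \<le> c" by (simp add: not_less)
  moreover have "\<And>n. p n \<le> p (Suc n)" using le_mono by simp
  ultimately obtain N where "\<forall>n\<ge>N. p n = p N" using mono_bounded_const[of p c] by blast
  thus False using sc unfolding is_scale_def by blast
qed

lemma X_lt: "x \<in> odometer p \<Longrightarrow> x n < p n"
  unfolding odometer_def by blast

lemma X_mod: "x \<in> odometer p \<Longrightarrow> n \<le> m \<Longrightarrow> x m mod p n = x n"
proof (induction m)
  case 0 then show ?case using X_lt by simp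
next
  case (Suc m)
  show ?case
  proof (cases "n = Suc m")
    case True then show ?thesis using X_lt Suc by simp
  next
    case False
    hence nm: "n \<le> m" using Suc by simp
    have "x (Suc m) mod p m = x m" using Suc(2) unfolding odometer_def by blast
    hence "x (Suc m) mod p n = x m mod p n" using dvd_mono[OF nm] by (metis mod_mod_cancel)
    thus ?thesis using Suc nm by simp
  qed
qed

lemma X_mod_dvd: assumes "x \<in> odometer p" "p n dvd p a" shows "x a mod p n = x n"
proof (cases "n \<le> a")
  case True then show ?thesis using X_mod assms by simp
next
  case False
  hence "p a dvd p n" using dvd_mono by simp
  hence "p a = p n" using assms(2) by (simp add: dvd_antisym)
  moreover have "x n mod p a = x a" using X_mod assms(1) False by simp
  ultimately show ?thesis using X_lt[OF assms(1), of n] X_lt[OF assms(1), of a] by simp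
qed

lemma iota_in: "iota p i \<in> odometer p"
  unfolding odometer_def iota_def using pos dvd_mono
  by (auto simp: mod_mod_cancel)

lemma zero_in: "(\<lambda>n. 0) \<in> odometer p"
  unfolding odometer_def using pos by auto

lemma iota_at: "x \<in> odometer p \<Longrightarrow> iota p (x m) m = x m"
  unfolding iota_def using X_lt by simp

lemma Tpow: "x \<in> odometer p \<Longrightarrow> (odo_plus1 p ^^ j) x = (\<lambda>n. (x n + j) mod p n)"
proof (induction j)
  case 0 then show ?case using X_lt by auto
next
  case (Suc j)
  have "(odo_plus1 p ^^ Suc j) x = odo_plus1 p ((odo_plus1 p ^^ j) x)" by simp
  also have "... = odo_plus1 p (\<lambda>n. (x n + j) mod p n)" using Suc by simp
  also have "... = (\<lambda>n. (x n + Suc j) mod p n)"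
    unfolding odo_plus1_def odo_add_def odo_one_def
  proof (rule ext)
    fix n show "((x n + j) mod p n + 1 mod p n) mod p n = (x n + Suc j) mod p n"
      using mod_add_eq[of "x n + j" "p n" 1] by simp
  qed
  finally show ?case .
qed

lemma trn_in: "x \<in> odometer p \<Longrightarrow> a \<in> odometer p \<Longrightarrow> trn p a x \<in> odometer p"
proof -
  assume x: "x \<in> odometer p" and a: "a \<in> odometer p"
  have "(x (Suc n) + a (Suc n)) mod p (Suc n) mod p n = (x n + a n) mod p n" for n
  proof -
    have d: "p n dvd p (Suc n)" using dvd_mono by simp
    have "(x (Suc n) + a (Suc n)) mod p (Suc n) mod p n = (x (Suc n) + a (Suc n)) mod p n"
      using d by (simp add: mod_mod_cancel)
    also have "... = (x (Suc n) mod p n + a (Suc n) mod p n) mod p n" by (simp add: mod_add_eq)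
    also have "... = (x n + a n) mod p n" using x a unfolding odometer_def by simp
    finally show ?thesis .
  qed
  thus ?thesis unfolding odometer_def trn_def using pos by auto
qed

lemma shift_in: "x \<in> odometer p \<Longrightarrow> (\<lambda>n. (x n + j) mod p n) \<in> odometer p"
proof -
  assume x: "x \<in> odometer p"
  have "(\<lambda>n. (x n + j) mod p n) = trn p (iota p j) x"
    by (auto simp: trn_def iota_def mod_add_right_eq)
  thus ?thesis using trn_in[OF x iota_in] by simp
qed

lemma Tpow_in: "x \<in> odometer p \<Longrightarrow> (odo_plus1 p ^^ j) x \<in> odometer p"
  using Tpow shift_in by simp

lemma nofix: assumes "x \<in> odometer p" "c \<ge> 1" shows "(\<lambda>n. (x n + c) mod p n) \<noteq> x"
proof
  assume eq: "(\<lambda>n. (x n + c) mod p n) = x"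
  obtain n where n: "c < p n" using unbounded by blast
  have xn: "x n < p n" using X_lt assms by simp
  have e: "(x n + c) mod p n = x n" using fun_cong[OF eq, of n] by simp
  show False
  proof (cases "x n + c < p n")
    case True then show False using e assms(2) by simp
  next
    case False
    hence "(x n + c) mod p n = x n + c - p n" using n xn by (simp add: mod_if)
    thus False using e n False by linarith
  qed
qed

lemma local_X:
  fixes f :: "(nat \<Rightarrow> nat) \<Rightarrow> (nat \<Rightarrow> nat)"
  assumes "continuous_on (odometer p) f" "x \<in> odometer p"
  shows "\<exists>M0. \<forall>M\<ge>M0. \<forall>z\<in>odometer p. z M = x M \<longrightarrow> f z m = f x m"
proof -
  obtain F where F: "finite F" "\<forall>z\<in>odometer p. (\<forall>i\<in>F. z i = x i) \<longrightarrow> f z m = f x m"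
    using cont_local[OF assms] by blast
  show ?thesis
  proof (intro exI allI impI ballI)
    fix M z assume M: "(if F = {} then 0 else Max F) \<le> M" and z: "z \<in> odometer p" "z M = x M"
    have "\<forall>i\<in>F. z i = x i"
    proof
      fix i assume i: "i \<in> F"
      have "i \<le> Max F" using F(1) i by simp
      hence "i \<le> M" using M i by (auto split: if_splits)
      thus "z i = x i" using X_mod[OF z(1), of i M] X_mod[OF assms(2), of i M] z(2) by simp
    qed
    thus "f z m = f x m" using F z by blast
  qed
qed


lemma ngt_in: "a \<in> odometer p \<Longrightarrow> ngt p a \<in> odometer p"
proof -
  assume a: "a \<in> odometer p"
  have "ngt p a (Suc n) mod p n = ngt p a n" for n
  proof -
    have "ngt p a (Suc n) mod p n = (p n - a (Suc n) mod p n) mod p n"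
      unfolding ngt_def using ar1[of "p n" "p (Suc n)" "a (Suc n)"] dvd_mono[of n "Suc n"] pos X_lt[OF a]
      by simp
    also have "... = ngt p a n" using a unfolding odometer_def ngt_def by simp
    finally show ?thesis .
  qed
  thus ?thesis unfolding odometer_def using pos by (auto simp: ngt_def)
qed

lemma trn_ngt: "a \<in> odometer p \<Longrightarrow> x \<in> odometer p \<Longrightarrow> trn p a (trn p (ngt p a) x) = x"
  unfolding trn_def ngt_def using ar2 X_lt by auto

lemma ngt_trn: "a \<in> odometer p \<Longrightarrow> x \<in> odometer p \<Longrightarrow> trn p (ngt p a) (trn p a x) = x"
  unfolding trn_def ngt_def using ar3 X_lt by auto

lemma trn_comm: "trn p a (trn p b x) = trn p b (trn p a x)"
proof (rule ext)
  fix n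
  have "((x n + b n) mod p n + a n) mod p n = (x n + b n + a n) mod p n" by (simp add: mod_add_left_eq)
  moreover have "((x n + a n) mod p n + b n) mod p n = (x n + a n + b n) mod p n" by (simp add: mod_add_left_eq)
  ultimately show "trn p a (trn p b x) n = trn p b (trn p a x) n" unfolding trn_def by (simp add: add_ac)
qed

lemma trn_coord: "\<forall>n. \<exists>N. \<forall>x\<in>S. \<forall>y\<in>S. x N = y N \<longrightarrow> trn p a x n = trn p a y n"
proof (intro allI)
  fix n show "\<exists>N. \<forall>x\<in>S. \<forall>y\<in>S. x N = y N \<longrightarrow> trn p a x n = trn p a y n"
    by (rule exI[of _ n]) (simp add: trn_def)
qed

lemma homeo_coord:
  fixes f g :: "(nat \<Rightarrow> nat) \<Rightarrow> (nat \<Rightarrow> nat)"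
  assumes "f ` X \<subseteq> X" "g ` X \<subseteq> X" "\<forall>x\<in>X. g (f x) = x" "\<forall>x\<in>X. f (g x) = x"
    "\<forall>n. \<exists>N. \<forall>x\<in>X. \<forall>y\<in>X. x N = y N \<longrightarrow> f x n = f y n"
    "\<forall>n. \<exists>N. \<forall>x\<in>X. \<forall>y\<in>X. x N = y N \<longrightarrow> g x n = g y n"
  shows "homeomorphism X X f g"
  unfolding homeomorphism_def
proof (intro conjI)
  show "f ` X = X"
  proof
    show "X \<subseteq> f ` X"
    proof
      fix y assume y: "y \<in> X"
      hence "f (g y) = y" "g y \<in> X" using assms(2,4) by auto
      thus "y \<in> f ` X" by (metis image_eqI)
    qed
  qed (rule assms(1))
  show "g ` X = X"
  proof
    show "X \<subseteq> g ` X"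
    proof
      fix y assume y: "y \<in> X"
      hence "g (f y) = y" "f y \<in> X" using assms(1,3) by auto
      thus "y \<in> g ` X" by (metis image_eqI)
    qed
  qed (rule assms(2))
  show "continuous_on X f" using cont_coord_dep assms(5) by blast
  show "continuous_on X g" using cont_coord_dep assms(6) by blast
qed (use assms in auto)

lemma aut_memI:
  fixes f g :: "(nat \<Rightarrow> nat) \<Rightarrow> (nat \<Rightarrow> nat)"
  assumes "f ` odometer p \<subseteq> odometer p" "g ` odometer p \<subseteq> odometer p"
    "\<forall>x\<in>odometer p. g (f x) = x" "\<forall>x\<in>odometer p. f (g x) = x"
    "\<forall>n. \<exists>N. \<forall>x\<in>odometer p. \<forall>y\<in>odometer p. x N = y N \<longrightarrow> f x n = f y n"
    "\<forall>n. \<exists>N. \<forall>x\<in>odometer p. \<forall>y\<in>odometer p. x N = y N \<longrightarrow> g x n = g y n"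
    "k \<ge> 1" "\<forall>x\<in>odometer p. f ((odo_plus1 p ^^ k) x) = (odo_plus1 p ^^ k) (f x)"
  shows "restrict f (odometer p) \<in> carrier (Aut_inf_group (odometer p) (odo_plus1 p))"
proof -
  let ?X = "odometer p"
  have hf: "homeomorphism ?X ?X f g" using homeo_coord[OF assms(1-6)] .
  have bf: "bij_betw f ?X ?X"
  proof (rule bij_betwI[of f ?X ?X g])
    show "f \<in> ?X \<rightarrow> ?X" using assms(1) by auto
    show "g \<in> ?X \<rightarrow> ?X" using assms(2) by auto
  qed (use assms(3,4) in auto)
  have bf2: "bij_betw (restrict f ?X) ?X ?X" using bf bij_betw_cong[of ?X "restrict f ?X" f ?X] by simp
  have B: "restrict f ?X \<in> Bij ?X" unfolding Bij_def using bf2 by simp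
  have H: "homeomorphism ?X ?X (restrict f ?X) g" by (rule homeomorphism_cong[OF hf]) auto
  have C: "\<forall>x\<in>?X. restrict f ?X ((odo_plus1 p ^^ k) x) = (odo_plus1 p ^^ k) (restrict f ?X x)"
  proof
    fix x assume x: "x \<in> ?X"
    have "(odo_plus1 p ^^ k) x \<in> ?X" using Tpow_in[OF x] .
    thus "restrict f ?X ((odo_plus1 p ^^ k) x) = (odo_plus1 p ^^ k) (restrict f ?X x)" using x assms(8) by simp
  qed
  have "restrict f ?X \<in> Aut_inf ?X (odo_plus1 p)"
    unfolding Aut_inf_def
  proof (intro CollectI conjI exI)
    show "restrict f ?X \<in> Bij ?X" by (rule B)
    show "homeomorphism ?X ?X (restrict f ?X) g" by (rule H)
    show "k \<ge> 1" by (rule assms(7))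
    show "\<forall>x\<in>?X. restrict f ?X ((odo_plus1 p ^^ k) x) = (odo_plus1 p ^^ k) (restrict f ?X x)" by (rule C)
  qed
  thus ?thesis unfolding Aut_inf_group_def by simp
qed

lemma TX: "odo_plus1 p ` odometer p \<subseteq> odometer p"
proof
  fix y assume "y \<in> odo_plus1 p ` odometer p"
  then obtain x where x: "x \<in> odometer p" "y = odo_plus1 p x" by blast
  have "(odo_plus1 p ^^ 1) x \<in> odometer p" by (rule Tpow_in[OF x(1)])
  thus "y \<in> odometer p" using x(2) by simp
qed

lemma T_eq: "x \<in> odometer p \<Longrightarrow> odo_plus1 p x = (\<lambda>n. (x n + 1) mod p n)"
  using Tpow[of x 1] by simp

lemma trn_pow: "x \<in> odometer p \<Longrightarrow> (trn p e ^^ j) x = (\<lambda>n. (x n + j * e n) mod p n)"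
proof (induction j)
  case 0 then show ?case using X_lt by auto
next
  case (Suc j)
  show ?case using Suc by (simp add: trn_def mod_add_right_eq add_ac)
qed

lemma aut_carrier:
  assumes "u \<in> carrier (Aut_inf_group (odometer p) (odo_plus1 p))"
  shows "u ` odometer p \<subseteq> odometer p" "continuous_on (odometer p) u" "u \<in> extensional (odometer p)"
    "\<exists>k\<ge>1. \<forall>x\<in>odometer p. u ((odo_plus1 p ^^ k) x) = (odo_plus1 p ^^ k) (u x)"
    "\<exists>g. homeomorphism (odometer p) (odometer p) u g"
proof -
  have A: "u \<in> Bij (odometer p)" "\<exists>g. homeomorphism (odometer p) (odometer p) u g"
    "\<exists>k\<ge>1. \<forall>x\<in>odometer p. u ((odo_plus1 p ^^ k) x) = (odo_plus1 p ^^ k) (u x)"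
    using assms unfolding Aut_inf_group_def Aut_inf_def by auto
  show "u ` odometer p \<subseteq> odometer p" using Bij_imp_funcset[OF A(1)] by auto
  show "continuous_on (odometer p) u" using A(2) unfolding homeomorphism_def by blast
  show "u \<in> extensional (odometer p)" using A(1) by (simp add: Bij_def)
  show "\<exists>k\<ge>1. \<forall>x\<in>odometer p. u ((odo_plus1 p ^^ k) x) = (odo_plus1 p ^^ k) (u x)" by (rule A(3))
  show "\<exists>g. homeomorphism (odometer p) (odometer p) u g" by (rule A(2))
qed

lemma commT_trn:
  fixes u :: "(nat \<Rightarrow> nat) \<Rightarrow> (nat \<Rightarrow> nat)"
  assumes c: "continuous_on (odometer p) u" and uX: "u ` odometer p \<subseteq> odometer p"
    and cm: "\<forall>x\<in>odometer p. u (odo_plus1 p x) = odo_plus1 p (u x)"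
  shows "\<forall>x\<in>odometer p. u x = trn p (u (\<lambda>n. 0)) x"
proof
  fix x assume x: "x \<in> odometer p"
  let ?z = "(\<lambda>n::nat. 0::nat)"
  have u0: "u ?z \<in> odometer p" using uX zero_in by blast
  have it: "\<forall>z\<in>odometer p. u ((odo_plus1 p ^^ j) z) = (odo_plus1 p ^^ j) (u z)" for j
    by (rule comm_iter[OF cm TX])
  have ui: "u (iota p j) = (\<lambda>n. (u ?z n + j) mod p n)" for j
  proof -
    have "iota p j = (odo_plus1 p ^^ j) ?z" using Tpow[OF zero_in] by (simp add: iota_def)
    thus ?thesis using it[of j] zero_in Tpow[OF u0] by simp
  qed
  show "u x = trn p (u ?z) x"
  proof (rule ext)
    fix m
    obtain M0 where M0: "\<forall>M\<ge>M0. \<forall>z\<in>odometer p. z M = x M \<longrightarrow> u z m = u x m"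
      using local_X[OF c x] by blast
    let ?M = "max M0 m"
    have "iota p (x ?M) ?M = x ?M" using iota_at[OF x] .
    hence "u (iota p (x ?M)) m = u x m" using M0[rule_format, OF max.cobounded1 iota_in] by simp
    hence "u x m = (u ?z m + x ?M) mod p m" using ui by simp
    also have "... = (u ?z m + x ?M mod p m) mod p m" by (simp add: mod_add_right_eq)
    also have "... = (u ?z m + x m) mod p m" using X_mod[OF x, of m ?M] by simp
    finally show "u x m = trn p (u ?z) x m" unfolding trn_def by (simp add: add_ac)
  qed
qed

theorem PhiA:
  assumes r: "prime r" and nd: "\<forall>n. \<not> r dvd p n"
  shows "Phi r (Aut_inf_group (odometer p) (odo_plus1 p))"
proof -
  let ?X = "odometer p"
  let ?T = "odo_plus1 p"
  let ?G = "Aut_inf_group ?X ?T"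
  have grp: "group ?G" using TX by (rule Aut_inf_group_group)
  have inv_ex: "\<exists>a. a < p n \<and> (r * a) mod p n = 1 mod p n" for n
  proof -
    have cp: "coprime r (p n)" using r nd prime_imp_coprime by blast
    obtain x y where xy: "r * x = p n * y + gcd r (p n)" using bezout_nat[of r "p n"] r prime_gt_0_nat by fastforce
    hence "(r * x) mod p n = (1 + p n * y) mod p n" using cp by simp
    hence "(r * x) mod p n = 1 mod p n" by (simp only: mod_mult_self2)
    hence "(r * (x mod p n)) mod p n = 1 mod p n" by (simp add: mod_mult_right_eq)
    thus ?thesis using pos by (meson mod_less_divisor)
  qed
  have uniq: "a = b" if "a < p n" "b < p n" "(r * a) mod p n = 1 mod p n" "(r * b) mod p n = 1 mod p n" for a b n
  proof -
    obtain x where x: "(r * x) mod p n = 1 mod p n" "x < p n" using inv_ex by blast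
    have xr: "(x * r) mod p n = 1 mod p n" using x(1) by (simp add: mult.commute)
    have "(x * r * a) mod p n = (((x * r) mod p n) * a) mod p n" by (simp add: mod_mult_left_eq)
    also have "... = a mod p n" using xr by (simp add: mod_mult_left_eq)
    finally have "a mod p n = (x * r * a) mod p n" by simp
    also have "... = (x * ((r * a) mod p n)) mod p n" by (simp add: mod_mult_right_eq mult.assoc)
    also have "... = (x * ((r * b) mod p n)) mod p n" using that by simp
    also have "... = (x * r * b) mod p n" by (simp add: mod_mult_right_eq mult.assoc)
    also have "... = (((x * r) mod p n) * b) mod p n" by (simp add: mod_mult_left_eq)
    also have "... = b mod p n" using xr by (simp add: mod_mult_left_eq)
    finally show ?thesis using that by simp
  qed
  define e where "e = (\<lambda>n. SOME a. a < p n \<and> (r * a) mod p n = 1 mod p n)"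
  have e: "e n < p n \<and> (r * e n) mod p n = 1 mod p n" for n
    unfolding e_def using someI_ex[OF inv_ex] .
  have eX: "e \<in> ?X" unfolding odometer_def
  proof (intro CollectI allI conjI)
    fix n
    show "e n < p n" using e by blast
    have dS: "p n dvd p (Suc n)" using dvd_mono by simp
    have "(r * (e (Suc n) mod p n)) mod p n = (r * e (Suc n)) mod p n" by (simp add: mod_mult_right_eq)
    also have "... = ((r * e (Suc n)) mod p (Suc n)) mod p n" using mod_mod_cancel[OF dS] by simp
    also have "... = (1 mod p (Suc n)) mod p n" using e[of "Suc n"] by simp
    also have "... = 1 mod p n" by (rule mod_mod_cancel[OF dS])
    finally have c: "(r * (e (Suc n) mod p n)) mod p n = 1 mod p n" .
    show "e (Suc n) mod p n = e n"
      by (rule uniq[OF _ _ c]) (use pos[of n] e[of n] in auto)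
  qed
  define h where "h = restrict (trn p e) ?X"
  have trnX: "\<And>a x. a \<in> ?X \<Longrightarrow> x \<in> ?X \<Longrightarrow> trn p a x \<in> ?X" using trn_in by blast
  have eX': "e \<in> odometer p" using eX .
  have hG: "h \<in> carrier ?G" unfolding h_def
  proof (rule aut_memI[where g = "trn p (ngt p e)" and k = 1])
    show "trn p e ` odometer p \<subseteq> odometer p" using trn_in eX' by blast
    show "trn p (ngt p e) ` odometer p \<subseteq> odometer p" using trn_in ngt_in[OF eX'] by blast
    show "\<forall>x\<in>odometer p. trn p (ngt p e) (trn p e x) = x" using ngt_trn eX' by blast
    show "\<forall>x\<in>odometer p. trn p e (trn p (ngt p e) x) = x" using trn_ngt eX' by blast
    show "\<forall>x\<in>odometer p. trn p e ((odo_plus1 p ^^ 1) x) = (odo_plus1 p ^^ 1) (trn p e x)"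
    proof
      fix x assume x: "x \<in> odometer p"
      have a1: "(odo_plus1 p ^^ 1) x = (\<lambda>n. (x n + 1) mod p n)" using Tpow[OF x, of 1] .
      have a2: "(odo_plus1 p ^^ 1) (trn p e x) = (\<lambda>n. (trn p e x n + 1) mod p n)"
        using Tpow[OF trn_in[OF x eX'], of 1] .
      show "trn p e ((odo_plus1 p ^^ 1) x) = (odo_plus1 p ^^ 1) (trn p e x)"
        unfolding a1 a2
      proof (rule ext)
        fix n
        have "((x n + 1) mod p n + e n) mod p n = (x n + 1 + e n) mod p n" by (simp add: mod_add_left_eq)
        moreover have "((x n + e n) mod p n + 1) mod p n = (x n + e n + 1) mod p n" by (simp add: mod_Suc_eq)
        ultimately show "trn p e (\<lambda>n. (x n + 1) mod p n) n = (trn p e x n + 1) mod p n"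
          unfolding trn_def by (simp add: add_ac)
      qed
    qed
    show "\<forall>n. \<exists>N. \<forall>x\<in>odometer p. \<forall>y\<in>odometer p. x N = y N \<longrightarrow> trn p e x n = trn p e y n"
      by (rule trn_coord)
    show "\<forall>n. \<exists>N. \<forall>x\<in>odometer p. \<forall>y\<in>odometer p. x N = y N \<longrightarrow> trn p (ngt p e) x n = trn p (ngt p e) y n"
      by (rule trn_coord)
  qed simp
  have hr: "h [^]\<^bsub>?G\<^esub> r = restrict ?T ?X"
  proof -
    have "h [^]\<^bsub>?G\<^esub> r = restrict (h ^^ r) ?X" by (rule Aut_inf_pow[OF hG TX])
    also have "... = restrict ?T ?X"
    proof (rule restrict_ext)
      fix x assume x: "x \<in> ?X"
      have "(h ^^ r) x = (trn p e ^^ r) x" unfolding h_def by (rule restrict_funpow[OF _ x]) (use trn_in eX' in blast)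
      also have "... = (\<lambda>n. (x n + r * e n) mod p n)" using trn_pow x by simp
      also have "... = (\<lambda>n. (x n + 1) mod p n)"
      proof (rule ext)
        fix n
        have "(x n + r * e n) mod p n = (x n + (r * e n) mod p n) mod p n" by (simp add: mod_add_right_eq)
        also have "... = (x n + 1 mod p n) mod p n" using e by simp
        also have "... = (x n + 1) mod p n" by (simp add: mod_add_right_eq)
        finally show "(x n + r * e n) mod p n = (x n + 1) mod p n" .
      qed
      also have "... = ?T x" using T_eq x by simp
      finally show "(h ^^ r) x = ?T x" .
    qed
    finally show ?thesis .
  qed
  have gG: "restrict ?T ?X \<in> carrier ?G" using hr monoid.nat_pow_closed[OF group.is_monoid[OF grp] hG, of r] by simp
  have form: "\<forall>x\<in>?X. u x = trn p (u (\<lambda>n. 0)) x"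
    if u: "u \<in> carrier ?G" "u \<otimes>\<^bsub>?G\<^esub> restrict ?T ?X = restrict ?T ?X \<otimes>\<^bsub>?G\<^esub> u" for u
  proof -
    have uc: "u ` ?X \<subseteq> ?X" "continuous_on ?X u" using aut_carrier u(1) by auto
    have m1: "u \<otimes>\<^bsub>?G\<^esub> restrict ?T ?X = compose ?X u (restrict ?T ?X)"
      using Aut_inf_mult[of u ?X ?T "restrict ?T ?X"] u(1) gG by blast
    have m2: "restrict ?T ?X \<otimes>\<^bsub>?G\<^esub> u = compose ?X (restrict ?T ?X) u"
      using Aut_inf_mult[of "restrict ?T ?X" ?X ?T u] u(1) gG by blast
    have ceq: "compose ?X u (restrict ?T ?X) = compose ?X (restrict ?T ?X) u" using u(2) m1 m2 by simp
    have "\<forall>x\<in>?X. u (?T x) = ?T (u x)"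
    proof
      fix x assume x: "x \<in> ?X"
      have Tx: "?T x \<in> ?X" using TX x by blast
      have ux: "u x \<in> ?X" using uc(1) x by blast
      have "compose ?X u (restrict ?T ?X) x = u (?T x)" using x Tx by (simp add: compose_def)
      moreover have "compose ?X (restrict ?T ?X) u x = ?T (u x)" using x ux by (simp add: compose_def)
      ultimately show "u (?T x) = ?T (u x)" using ceq by simp
    qed
    thus ?thesis using commT_trn uc by blast
  qed
  show ?thesis unfolding Phi_def
  proof (intro bexI[OF _ hG] ballI impI)
    fix u v assume u: "u \<in> carrier ?G" and v: "v \<in> carrier ?G"
      and cu: "u \<otimes>\<^bsub>?G\<^esub> h [^]\<^bsub>?G\<^esub> r = h [^]\<^bsub>?G\<^esub> r \<otimes>\<^bsub>?G\<^esub> u"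
      and cv: "v \<otimes>\<^bsub>?G\<^esub> h [^]\<^bsub>?G\<^esub> r = h [^]\<^bsub>?G\<^esub> r \<otimes>\<^bsub>?G\<^esub> v"
    have fu: "\<forall>x\<in>?X. u x = trn p (u (\<lambda>n. 0)) x" using form u cu hr by simp
    have fv: "\<forall>x\<in>?X. v x = trn p (v (\<lambda>n. 0)) x" using form v cv hr by simp
    have uX: "u ` ?X \<subseteq> ?X" "v ` ?X \<subseteq> ?X" using aut_carrier u v by auto
    have "compose ?X u v = compose ?X v u"
      unfolding compose_def
    proof (rule restrict_ext)
      fix x assume x: "x \<in> ?X"
      have "u (v x) = trn p (u (\<lambda>n. 0)) (trn p (v (\<lambda>n. 0)) x)" using fu fv uX x by auto
      also have "... = trn p (v (\<lambda>n. 0)) (trn p (u (\<lambda>n. 0)) x)" by (rule trn_comm)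
      also have "... = v (u x)" using fu fv uX x by auto
      finally show "u (v x) = v (u x)" .
    qed
    moreover have "u \<otimes>\<^bsub>?G\<^esub> v = compose ?X u v" using Aut_inf_mult[of u ?X ?T v] u v by blast
    moreover have "v \<otimes>\<^bsub>?G\<^esub> u = compose ?X v u" using Aut_inf_mult[of v ?X ?T u] u v by blast
    ultimately show "u \<otimes>\<^bsub>?G\<^esub> v = v \<otimes>\<^bsub>?G\<^esub> u" by simp
  qed
qed


lemma trn_mem:
  assumes a: "a \<in> odometer p"
  shows "restrict (trn p a) (odometer p) \<in> carrier (Aut_inf_group (odometer p) (odo_plus1 p))"
proof (rule aut_memI[where g = "trn p (ngt p a)" and k = 1])
  show "trn p a ` odometer p \<subseteq> odometer p" using trn_in a by blast
  show "trn p (ngt p a) ` odometer p \<subseteq> odometer p" using trn_in ngt_in[OF a] by blast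
  show "\<forall>x\<in>odometer p. trn p (ngt p a) (trn p a x) = x" using ngt_trn a by blast
  show "\<forall>x\<in>odometer p. trn p a (trn p (ngt p a) x) = x" using trn_ngt a by blast
  show "\<forall>x\<in>odometer p. trn p a ((odo_plus1 p ^^ 1) x) = (odo_plus1 p ^^ 1) (trn p a x)"
  proof
    fix x assume x: "x \<in> odometer p"
    have a1: "(odo_plus1 p ^^ 1) x = (\<lambda>n. (x n + 1) mod p n)" using Tpow[OF x, of 1] .
    have a2: "(odo_plus1 p ^^ 1) (trn p a x) = (\<lambda>n. (trn p a x n + 1) mod p n)"
      using Tpow[OF trn_in[OF x a], of 1] .
    show "trn p a ((odo_plus1 p ^^ 1) x) = (odo_plus1 p ^^ 1) (trn p a x)"
      unfolding a1 a2
    proof (rule ext)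
      fix n
      have "((x n + 1) mod p n + a n) mod p n = (x n + 1 + a n) mod p n" by (simp add: mod_add_left_eq)
      moreover have "((x n + a n) mod p n + 1) mod p n = (x n + a n + 1) mod p n" by (simp add: mod_Suc_eq)
      ultimately show "trn p a (\<lambda>n. (x n + 1) mod p n) n = (trn p a x n + 1) mod p n"
        unfolding trn_def by (simp add: add_ac)
    qed
  qed
  show "\<forall>n. \<exists>N. \<forall>x\<in>odometer p. \<forall>y\<in>odometer p. x N = y N \<longrightarrow> trn p a x n = trn p a y n"
    by (rule trn_coord)
  show "\<forall>n. \<exists>N. \<forall>x\<in>odometer p. \<forall>y\<in>odometer p. x N = y N \<longrightarrow> trn p (ngt p a) x n = trn p (ngt p a) y n"
    by (rule trn_coord)
qed simp

lemma Tpow_trn: "x \<in> odometer p \<Longrightarrow> (odo_plus1 p ^^ j) x = trn p (iota p j) x"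
  using Tpow[of x j] unfolding trn_def iota_def by (simp add: mod_add_right_eq)

lemma piece_mem:
  assumes a: "a \<in> odometer p" and am: "a m = 0"
  shows "restrict (\<lambda>x. if x m \<in> B then trn p a x else x) (odometer p)
           \<in> carrier (Aut_inf_group (odometer p) (odo_plus1 p))"
proof -
  let ?X = "odometer p"
  let ?f = "\<lambda>x. if x m \<in> B then trn p a x else x"
  let ?g = "\<lambda>x. if x m \<in> B then trn p (ngt p a) x else x"
  have na: "ngt p a \<in> ?X" using ngt_in[OF a] .
  have nam: "ngt p a m = 0" using am unfolding ngt_def by simp
  have tm: "\<And>x. x \<in> ?X \<Longrightarrow> trn p a x m = x m" using am X_lt unfolding trn_def by simp
  have tm2: "\<And>x. x \<in> ?X \<Longrightarrow> trn p (ngt p a) x m = x m" using nam X_lt unfolding trn_def by simp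
  show ?thesis
  proof (rule aut_memI[where g = ?g and k = "p m"])
    show "?f ` ?X \<subseteq> ?X" using trn_in a by auto
    show "?g ` ?X \<subseteq> ?X" using trn_in na by auto
    show "\<forall>x\<in>?X. ?g (?f x) = x" using tm ngt_trn[OF a] by auto
    show "\<forall>x\<in>?X. ?f (?g x) = x" using tm2 trn_ngt[OF a] by auto
    show "\<forall>n. \<exists>N. \<forall>x\<in>?X. \<forall>y\<in>?X. x N = y N \<longrightarrow> ?f x n = ?f y n"
    proof
      fix n
      show "\<exists>N. \<forall>x\<in>?X. \<forall>y\<in>?X. x N = y N \<longrightarrow> ?f x n = ?f y n"
      proof (intro exI[of _ "max n m"] ballI impI)
        fix x y assume x: "x \<in> ?X" and y: "y \<in> ?X" and e: "x (max n m) = y (max n m)"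
        have "x n = y n" using X_mod[OF x, of n "max n m"] X_mod[OF y, of n "max n m"] e by simp
        moreover have "x m = y m" using X_mod[OF x, of m "max n m"] X_mod[OF y, of m "max n m"] e by simp
        ultimately show "?f x n = ?f y n" unfolding trn_def by simp
      qed
    qed
    show "\<forall>n. \<exists>N. \<forall>x\<in>?X. \<forall>y\<in>?X. x N = y N \<longrightarrow> ?g x n = ?g y n"
    proof
      fix n
      show "\<exists>N. \<forall>x\<in>?X. \<forall>y\<in>?X. x N = y N \<longrightarrow> ?g x n = ?g y n"
      proof (intro exI[of _ "max n m"] ballI impI)
        fix x y assume x: "x \<in> ?X" and y: "y \<in> ?X" and e: "x (max n m) = y (max n m)"
        have "x n = y n" using X_mod[OF x, of n "max n m"] X_mod[OF y, of n "max n m"] e by simp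
        moreover have "x m = y m" using X_mod[OF x, of m "max n m"] X_mod[OF y, of m "max n m"] e by simp
        ultimately show "?g x n = ?g y n" unfolding trn_def by simp
      qed
    qed
    show "1 \<le> p m" using pos[of m] by simp
    show "\<forall>x\<in>?X. ?f ((odo_plus1 p ^^ p m) x) = (odo_plus1 p ^^ p m) (?f x)"
    proof
      fix x assume x: "x \<in> ?X"
      have e1: "(odo_plus1 p ^^ p m) x = trn p (iota p (p m)) x" using Tpow_trn[OF x] .
      have e1m: "trn p (iota p (p m)) x m = x m" using X_lt[OF x, of m] unfolding trn_def iota_def by simp
      show "?f ((odo_plus1 p ^^ p m) x) = (odo_plus1 p ^^ p m) (?f x)"
      proof (cases "x m \<in> B")
        case True
        have "(odo_plus1 p ^^ p m) (trn p a x) = trn p (iota p (p m)) (trn p a x)"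
          using Tpow_trn[OF trn_in[OF x a]] .
        thus ?thesis using True e1 e1m tm[OF x] trn_comm by simp
      next
        case False
        thus ?thesis using e1 e1m by simp
      qed
    qed
  qed
qed

lemma cyl:
  fixes f :: "(nat \<Rightarrow> nat) \<Rightarrow> (nat \<Rightarrow> nat)"
  assumes c: "continuous_on (odometer p) f" and fX: "f ` odometer p \<subseteq> odometer p"
    and k: "k \<ge> 1" and cm: "\<forall>x\<in>odometer p. f ((odo_plus1 p ^^ k) x) = (odo_plus1 p ^^ k) (f x)"
    and st: "\<forall>M\<ge>m. gcd k (p M) = gcd k (p m)"
    and x: "x \<in> odometer p" and z: "z \<in> odometer p" and e: "x m = z m"
  shows "f x m = f z m"
proof -
  have TkX: "(odo_plus1 p ^^ k) ` odometer p \<subseteq> odometer p" using Tpow_in by blast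
  have cmj: "\<forall>y\<in>odometer p. f ((odo_plus1 p ^^ (k * j)) y) = (odo_plus1 p ^^ (k * j)) (f y)" for j
    using comm_iter[OF cm TkX, of j] by (simp add: funpow_mult)
  obtain M0 where M0: "\<forall>M\<ge>M0. \<forall>w\<in>odometer p. w M = x M \<longrightarrow> f w m = f x m"
    using local_X[OF c x] by blast
  define M where "M = max M0 m"
  have Mm: "m \<le> M" "M0 \<le> M" unfolding M_def by auto
  have dM: "p m dvd p M" using dvd_mono[OF Mm(1)] .
  have g: "gcd k (p M) dvd p m" using st Mm(1) by (metis gcd_dvd2)
  have xm: "x M mod p m = z M mod p m" using X_mod[OF x Mm(1)] X_mod[OF z Mm(1)] e by simp
  have "p m dvd (x M + p M - z M)" by (rule modeq_dvd[OF xm X_lt[OF z] dM])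
  hence "gcd k (p M) dvd (x M + p M - z M)" using g dvd_trans by blast
  then obtain j where j: "(z M + k * j) mod p M = x M mod p M"
    using lincong[of k "z M" "p M" "x M"] k X_lt[OF z] by auto
  have j': "(z M + k * j) mod p M = x M" using j X_lt[OF x] by simp
  define w where "w = (odo_plus1 p ^^ (k * j)) z"
  have w: "w = (\<lambda>n. (z n + k * j) mod p n)" unfolding w_def using Tpow[OF z] .
  have wX: "w \<in> odometer p" unfolding w_def using Tpow_in[OF z] .
  have "w M = x M" using w j' by simp
  hence fw: "f w m = f x m" using M0 Mm(2) wX by blast
  have fzX: "f z \<in> odometer p" using fX z by blast
  have "f w = (\<lambda>n. (f z n + k * j) mod p n)" unfolding w_def using cmj[of j] z Tpow[OF fzX] by simp
  hence fw2: "f w m = (f z m + k * j) mod p m" by simp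
  have "(z M + k * j) mod p m = ((z M + k * j) mod p M) mod p m" using mod_mod_cancel[OF dM] by simp
  hence "(z M + k * j) mod p m = x M mod p m" using j' by simp
  hence "(z M + k * j) mod p m = z m" using X_mod[OF x Mm(1)] e by simp
  moreover have "(z M + k * j) mod p m = (z m + k * j) mod p m"
    using X_mod[OF z Mm(1)] by (metis mod_add_left_eq)
  ultimately have "(z m + k * j) mod p m = z m mod p m" using X_lt[OF z, of m] by simp
  hence "p m dvd k * j" using mod_eq_dvd_iff_nat[of "z m" "z m + k * j" "p m"] by simp
  hence "(f z m + k * j) mod p m = f z m mod p m" by (auto elim: dvdE)
  also have "... = f z m" using X_lt[OF fzX] by simp
  finally show ?thesis using fw fw2 by simp
qed


theorem PhiB:
  assumes r: "prime r" and inP: "\<forall>e. \<exists>n. r ^ e dvd p n"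
  shows "\<not> Phi r (Aut_inf_group (odometer p) (odo_plus1 p))"
proof
  let ?X = "odometer p"
  let ?T = "odo_plus1 p"
  let ?G = "Aut_inf_group ?X ?T"
  assume P: "Phi r ?G"
  obtain h where hG: "h \<in> carrier ?G" and ab: "\<forall>u\<in>carrier ?G. \<forall>v\<in>carrier ?G.
      u \<otimes>\<^bsub>?G\<^esub> (h [^]\<^bsub>?G\<^esub> r) = (h [^]\<^bsub>?G\<^esub> r) \<otimes>\<^bsub>?G\<^esub> u \<longrightarrow>
      v \<otimes>\<^bsub>?G\<^esub> (h [^]\<^bsub>?G\<^esub> r) = (h [^]\<^bsub>?G\<^esub> r) \<otimes>\<^bsub>?G\<^esub> v \<longrightarrow>
      u \<otimes>\<^bsub>?G\<^esub> v = v \<otimes>\<^bsub>?G\<^esub> u" using P[unfolded Phi_def] by (rule bexE)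
  have grp: "group ?G" using TX by (rule Aut_inf_group_group)
  have hX: "h ` ?X \<subseteq> ?X" and hc: "continuous_on ?X h" using aut_carrier[OF hG] by auto
  obtain k where k: "k \<ge> 1" "\<forall>x\<in>?X. h ((?T ^^ k) x) = (?T ^^ k) (h x)" using aut_carrier(4)[OF hG] by blast
  obtain h' where hh: "homeomorphism ?X ?X h h'" using aut_carrier(5)[OF hG] by blast
  have hd: "(\<forall>x\<in>?X. h' (h x) = x) \<and> h ` ?X = ?X \<and> continuous_on ?X h \<and>
     (\<forall>y\<in>?X. h (h' y) = y) \<and> h' ` ?X = ?X \<and> continuous_on ?X h'" using hh unfolding homeomorphism_def .
  have h'X: "h' ` ?X \<subseteq> ?X" "continuous_on ?X h'" "\<forall>x\<in>?X. h' (h x) = x" "\<forall>y\<in>?X. h (h' y) = y"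
    using hd by simp_all
  have TkX: "(?T ^^ k) ` ?X \<subseteq> ?X" using Tpow_in by blast
  have k': "\<forall>y\<in>?X. h' ((?T ^^ k) y) = (?T ^^ k) (h' y)"
  proof
    fix y assume y: "y \<in> ?X"
    have y1: "h' y \<in> ?X" using h'X y by blast
    have "(?T ^^ k) y = (?T ^^ k) (h (h' y))" using h'X(4) y by simp
    also have "... = h ((?T ^^ k) (h' y))" using k(2) y1 by simp
    finally have "h' ((?T ^^ k) y) = h' (h ((?T ^^ k) (h' y)))" by simp
    also have "... = (?T ^^ k) (h' y)" using h'X(3) Tpow_in[OF y1] by blast
    finally show "h' ((?T ^^ k) y) = (?T ^^ k) (h' y)" .
  qed
  define v where "v = multiplicity r k"
  have "\<exists>N. \<forall>n\<ge>N. gcd k (p n) = gcd k (p N)"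
  proof (rule mono_bounded_const[of "\<lambda>n. gcd k (p n)" k])
    fix n
    have d: "p n dvd p (Suc n)" using dvd_mono by simp
    have "gcd k (p n) dvd gcd k (p (Suc n))"
      by (rule gcd_greatest) (simp, rule dvd_trans[OF gcd_dvd2 d])
    moreover have "gcd k (p (Suc n)) > 0" using k by simp
    ultimately show "gcd k (p n) \<le> gcd k (p (Suc n))" by (rule dvd_imp_le)
    show "gcd k (p n) \<le> k" using k by (simp add: gcd_le1_nat)
  qed
  then obtain m1 where m1: "\<forall>n\<ge>m1. gcd k (p n) = gcd k (p m1)" by blast
  obtain m2 where m2: "r ^ (v + 1) dvd p m2" using inP by blast
  define m where "m = max m1 m2"
  have st: "\<forall>M\<ge>m. gcd k (p M) = gcd k (p m)"
  proof (intro allI impI)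
    fix M assume "m \<le> M"
    hence "m1 \<le> M" "m1 \<le> m" unfolding m_def by auto
    thus "gcd k (p M) = gcd k (p m)" using m1 by metis
  qed
  have "p m2 dvd p m" using dvd_mono[of m2 m] unfolding m_def by simp
  hence rv: "r ^ (v + 1) dvd p m" using m2 by (rule dvd_trans[rotated])
  have p0: "0 < p m" by (rule pos)
  define \<sigma> where "\<sigma> = (\<lambda>i. h (iota p i) m)"
  have S1: "h x m = \<sigma> (x m)" if x: "x \<in> ?X" for x
    unfolding \<sigma>_def by (rule cyl[OF hc hX k(1) k(2) st x iota_in]) (simp add: iota_at[OF x])
  have S2: "\<sigma> i < p m" for i unfolding \<sigma>_def using hX iota_in X_lt by blast
  define \<sigma>' where "\<sigma>' = (\<lambda>i. h' (iota p i) m)"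
  have S1': "h' x m = \<sigma>' (x m)" if x: "x \<in> ?X" for x
    unfolding \<sigma>'_def by (rule cyl[OF h'X(2) h'X(1) k(1) k' st x iota_in]) (simp add: iota_at[OF x])
  have iim: "i < p m \<Longrightarrow> iota p i m = i" for i unfolding iota_def by simp
  have S3: "\<sigma>' (\<sigma> i) = i" if i: "i < p m" for i
  proof -
    have hx: "h (iota p i) \<in> ?X" using hX iota_in by blast
    have "i = h' (h (iota p i)) m" using h'X(3) iota_in iim[OF i] by simp
    also have "... = \<sigma>' (h (iota p i) m)" using S1'[OF hx] .
    also have "... = \<sigma>' (\<sigma> i)" unfolding \<sigma>_def ..
    finally show ?thesis by simp
  qed
  let ?S = "{..<p m}"
  have injs: "inj_on \<sigma> ?S" by (rule inj_on_inverseI[of _ \<sigma>']) (use S3 in simp)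
  have sS: "\<sigma> ` ?S \<subseteq> ?S" using S2 by auto
  have S4: "\<sigma> ((i + k) mod p m) = (\<sigma> i + k) mod p m" if i: "i < p m" for i
  proof -
    have x: "iota p i \<in> ?X" by (rule iota_in)
    have Tx: "(?T ^^ k) (iota p i) = (\<lambda>n. (iota p i n + k) mod p n)" using Tpow[OF x] .
    have TxX: "(?T ^^ k) (iota p i) \<in> ?X" using Tpow_in[OF x] .
    have hxX: "h (iota p i) \<in> ?X" using hX x by blast
    have "\<sigma> ((i + k) mod p m) = h ((?T ^^ k) (iota p i)) m" using S1[OF TxX] Tx iim[OF i] by simp
    also have "... = (?T ^^ k) (h (iota p i)) m" using k(2) x by simp
    also have "... = (h (iota p i) m + k) mod p m" using Tpow[OF hxX] by simp
    finally show ?thesis unfolding \<sigma>_def by simp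
  qed
  have hpow: "h [^]\<^bsub>?G\<^esub> r = restrict (h ^^ r) ?X" by (rule Aut_inf_pow[OF hG TX])
  have gG: "h [^]\<^bsub>?G\<^esub> r \<in> carrier ?G" by (rule monoid.nat_pow_closed[OF group.is_monoid[OF grp] hG])
  have hjX: "(h ^^ j) x \<in> ?X" if "x \<in> ?X" for x j using funpow_in[OF hX that] .
  have hjm: "(h ^^ j) x m = (\<sigma> ^^ j) (x m)" if x: "x \<in> ?X" for x j
  proof (induction j)
    case 0 then show ?case by simp
  next
    case (Suc j)
    have "(h ^^ Suc j) x m = h ((h ^^ j) x) m" by simp
    also have "... = \<sigma> ((h ^^ j) x m)" using S1[OF hjX[OF x]] .
    finally show ?case using Suc by simp
  qed
  have hT: "\<forall>z\<in>?X. (?T ^^ (k * t)) (h z) = h ((?T ^^ (k * t)) z)" for t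
    using comm_iter[OF k(2) TkX, of t] by (simp add: funpow_mult)
  have hjT: "\<forall>z\<in>?X. (?T ^^ (k * t)) ((h ^^ j) z) = (h ^^ j) ((?T ^^ (k * t)) z)" for t j
    by (rule comm_iter[OF hT hX])
  define B where "B = range (\<lambda>j. (\<sigma> ^^ (r * j)) 0)"
  have BS: "B \<subseteq> ?S" unfolding B_def using funpow_in[OF sS] p0 by auto
  have srB: "(\<sigma> ^^ r) ` B \<subseteq> B"
  proof
    fix y assume "y \<in> (\<sigma> ^^ r) ` B"
    then obtain j where "y = (\<sigma> ^^ r) ((\<sigma> ^^ (r * j)) 0)" unfolding B_def by blast
    hence "y = (\<sigma> ^^ (r * Suc j)) 0" by (simp add: funpow_add)
    thus "y \<in> B" unfolding B_def by blast
  qed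
  have injr: "inj_on (\<sigma> ^^ r) ?S" by (rule inj_on_funpow[OF injs sS])
  have Beq: "(\<sigma> ^^ r) ` B = B"
    by (rule endo_inj_surj[OF finite_subset[OF BS finite_lessThan] srB inj_on_subset[OF injr BS]])
  have Bback: "i \<in> B" if bi1: "i \<in> ?S" and bi2: "(\<sigma> ^^ r) i \<in> B" for i
  proof -
    obtain b where b: "b \<in> B" "(\<sigma> ^^ r) i = (\<sigma> ^^ r) b" using bi2 Beq by (metis imageE)
    have "i = b" using inj_onD[OF injr b(2) bi1] b(1) BS by blast
    thus ?thesis using b by simp
  qed
  have B0: "0 \<in> B" unfolding B_def by (metis (mono_tags, lifting) funpow_0 mult_0_right rangeI)
  define c where "c = k * p m"
  define a where "a = iota p c"
  have aX: "a \<in> ?X" unfolding a_def by (rule iota_in)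
  have am: "a m = 0" unfolding a_def c_def iota_def by simp
  have c1: "c \<ge> 1" unfolding c_def using k p0 by simp
  have Tc: "(?T ^^ c) x = trn p a x" if "x \<in> ?X" for x unfolding a_def using Tpow_trn[OF that] .
  have nf: "trn p a y \<noteq> y" if y: "y \<in> ?X" for y
    using nofix[OF y c1] Tpow[OF y, of c] Tc[OF y] by simp
  define w where "w = restrict (\<lambda>x. if x m \<in> B then trn p a x else x) ?X"
  have wG: "w \<in> carrier ?G" unfolding w_def by (rule piece_mem[OF aX am])
  have wX: "w x \<in> ?X" if "x \<in> ?X" for x unfolding w_def using that trn_in[OF that aX] by simp
  have cTh: "(?T ^^ c) ((h ^^ j) x) = (h ^^ j) ((?T ^^ c) x)" if "x \<in> ?X" for x j
    using hjT[of "p m" j] that unfolding c_def by blast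
  have W1: "w \<otimes>\<^bsub>?G\<^esub> (h [^]\<^bsub>?G\<^esub> r) = (h [^]\<^bsub>?G\<^esub> r) \<otimes>\<^bsub>?G\<^esub> w"
    unfolding Aut_comm[OF wG gG]
  proof
    fix x assume x: "x \<in> ?X"
    have gx: "(h [^]\<^bsub>?G\<^esub> r) x = (h ^^ r) x" using hpow x by simp
    have gwx: "(h [^]\<^bsub>?G\<^esub> r) (w x) = (h ^^ r) (w x)" using hpow wX[OF x] by simp
    have xm: "x m \<in> ?S" using X_lt[OF x] by simp
    show "w ((h [^]\<^bsub>?G\<^esub> r) x) = (h [^]\<^bsub>?G\<^esub> r) (w x)"
    proof (cases "x m \<in> B")
      case True
      hence inB: "(h ^^ r) x m \<in> B" using hjm[OF x] srB by auto
      have "w ((h ^^ r) x) = trn p a ((h ^^ r) x)" unfolding w_def using inB hjX[OF x] by simp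
      also have "... = (?T ^^ c) ((h ^^ r) x)" using Tc[OF hjX[OF x]] by simp
      also have "... = (h ^^ r) ((?T ^^ c) x)" using cTh[OF x] .
      also have "... = (h ^^ r) (w x)" unfolding w_def using True x Tc[OF x] by simp
      finally show ?thesis using gx gwx by simp
    next
      case False
      hence "(h ^^ r) x m \<notin> B" using hjm[OF x] Bback xm by auto
      hence "w ((h ^^ r) x) = (h ^^ r) x" unfolding w_def using hjX[OF x] by simp
      moreover have "w x = x" unfolding w_def using False x by simp
      ultimately show ?thesis using gx gwx by simp
    qed
  qed
  have W2: "h \<otimes>\<^bsub>?G\<^esub> (h [^]\<^bsub>?G\<^esub> r) = (h [^]\<^bsub>?G\<^esub> r) \<otimes>\<^bsub>?G\<^esub> h"
  proof -
    have "h \<otimes>\<^bsub>?G\<^esub> (h [^]\<^bsub>?G\<^esub> r) = h [^]\<^bsub>?G\<^esub> Suc r"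
      using monoid.nat_pow_Suc2[OF group.is_monoid[OF grp] hG, of r] by simp
    also have "... = (h [^]\<^bsub>?G\<^esub> r) \<otimes>\<^bsub>?G\<^esub> h" by (rule nat_pow_Suc)
    finally show ?thesis .
  qed
  define tk where "tk = restrict (trn p (iota p k)) ?X"
  have tkG: "tk \<in> carrier ?G" unfolding tk_def by (rule trn_mem[OF iota_in])
  have W3: "tk \<otimes>\<^bsub>?G\<^esub> (h [^]\<^bsub>?G\<^esub> r) = (h [^]\<^bsub>?G\<^esub> r) \<otimes>\<^bsub>?G\<^esub> tk"
    unfolding Aut_comm[OF tkG gG]
  proof
    fix x assume x: "x \<in> ?X"
    have gx: "(h [^]\<^bsub>?G\<^esub> r) x = (h ^^ r) x" using hpow x by simp
    have tx: "tk x = (?T ^^ k) x" unfolding tk_def using x Tpow_trn[OF x] by simp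
    have txX: "tk x \<in> ?X" using tx Tpow_in[OF x] by simp
    have gtx: "(h [^]\<^bsub>?G\<^esub> r) (tk x) = (h ^^ r) (tk x)" using hpow txX by simp
    have "tk ((h ^^ r) x) = (?T ^^ k) ((h ^^ r) x)" unfolding tk_def using hjX[OF x] Tpow_trn[OF hjX[OF x]] by simp
    also have "... = (h ^^ r) ((?T ^^ k) x)" using hjT[of 1 r] x by simp
    finally show "tk ((h [^]\<^bsub>?G\<^esub> r) x) = (h [^]\<^bsub>?G\<^esub> r) (tk x)" using gx gtx tx by simp
  qed
  have hw: "\<forall>x\<in>?X. h (w x) = w (h x)" using ab hG wG W1 W2 Aut_comm[OF hG wG] by blast
  have tw: "\<forall>x\<in>?X. tk (w x) = w (tk x)" using ab tkG wG W1 W3 Aut_comm[OF tkG wG] by blast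
  have C1: "\<sigma> i \<in> B" if i: "i \<in> B" for i
  proof (rule ccontr)
    assume nB: "\<sigma> i \<notin> B"
    have ip: "i < p m" using i BS by auto
    let ?x = "iota p i"
    have x: "?x \<in> ?X" by (rule iota_in)
    have xm: "?x m = i" using iim[OF ip] .
    have hx: "h ?x \<in> ?X" using hX x by blast
    have hxm: "h ?x m = \<sigma> i" unfolding \<sigma>_def ..
    have "h (w ?x) = h (trn p a ?x)" unfolding w_def using x xm i by simp
    also have "... = h ((?T ^^ c) ?x)" using Tc[OF x] by simp
    also have "... = (?T ^^ c) (h ?x)" using cTh[OF x, of 1] by simp
    also have "... = trn p a (h ?x)" using Tc[OF hx] .
    finally have "h (w ?x) = trn p a (h ?x)" .
    moreover have "w (h ?x) = h ?x" unfolding w_def using hx hxm nB by simp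
    ultimately show False using hw x nf[OF hx] by simp
  qed
  have C2: "k mod p m \<in> B"
  proof (rule ccontr)
    assume nB: "k mod p m \<notin> B"
    let ?x = "iota p 0"
    have x: "?x \<in> ?X" by (rule iota_in)
    have xm: "?x m = 0" unfolding iota_def by simp
    have tx: "tk ?x = trn p (iota p k) ?x" unfolding tk_def using x by simp
    have txX: "tk ?x \<in> ?X" using tx trn_in[OF x iota_in] by simp
    have txm: "tk ?x m = k mod p m" using tx unfolding trn_def iota_def by simp
    have "tk (w ?x) = tk (trn p a ?x)" unfolding w_def using x xm B0 by simp
    also have "... = trn p (iota p k) (trn p a ?x)" unfolding tk_def using trn_in[OF x aX] by simp
    also have "... = trn p a (tk ?x)" using tx trn_comm by simp
    finally have "tk (w ?x) = trn p a (tk ?x)" .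
    moreover have "w (tk ?x) = tk ?x" unfolding w_def using txX txm nB by simp
    ultimately show False using tw x nf[OF txX] by simp
  qed
  obtain j0 where j0: "\<sigma> 0 = (\<sigma> ^^ (r * j0)) 0" using C1[OF B0] unfolding B_def by blast
  obtain j1 where j1: "k mod p m = (\<sigma> ^^ (r * j1)) 0" using C2 unfolding B_def by blast
  have r2: "r \<ge> 2" using r by (simp add: prime_ge_2_nat)
  obtain N where N: "(\<sigma> ^^ N) 0 = 0" "\<not> r dvd N" "N > 0"
  proof (cases "j0 = 0")
    case True
    show ?thesis
    proof (rule that[of 1])
      show "(\<sigma> ^^ 1) 0 = 0" using j0 True by simp
      show "\<not> r dvd 1" using r2 by simp
    qed simp
  next
    case False
    define N where "N = r * j0 - 1"
    have sN: "r * j0 = Suc N" unfolding N_def using False r2 by (cases j0) auto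
    have "\<sigma> ((\<sigma> ^^ N) 0) = \<sigma> 0" using j0 sN by simp
    moreover have "(\<sigma> ^^ N) 0 \<in> ?S" using funpow_in[OF sS] p0 by auto
    ultimately have "(\<sigma> ^^ N) 0 = 0" using inj_onD[OF injs] p0 by auto
    moreover have "\<not> r dvd N"
    proof
      assume "r dvd N"
      moreover have "r dvd Suc N" using sN by (metis dvd_triv_left)
      ultimately have "r dvd (Suc N - N)" by (rule dvd_diff_nat[rotated])
      hence "r dvd 1" by simp
      thus False using r2 by simp
    qed
    moreover have "N > 0"
    proof -
      have "r * 1 \<le> r * j0" using False by (intro mult_le_mono2) simp
      hence "2 \<le> r * j0" using r2 by linarith
      thus ?thesis unfolding N_def by simp
    qed
    ultimately show ?thesis using that by blast
  qed
  have itau: "\<forall>i<p m. (\<sigma> ^^ t) ((i + k) mod p m) = ((\<sigma> ^^ t) i + k) mod p m" for t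
  proof (induction t)
    case 0 then show ?case by simp
  next
    case (Suc t)
    show ?case
    proof (intro allI impI)
      fix i assume i: "i < p m"
      have ti: "(\<sigma> ^^ t) i < p m" using funpow_in[OF sS] i by auto
      have "(\<sigma> ^^ Suc t) ((i + k) mod p m) = \<sigma> ((\<sigma> ^^ t) ((i + k) mod p m))" by simp
      also have "... = \<sigma> (((\<sigma> ^^ t) i + k) mod p m)" using Suc i by simp
      also have "... = (\<sigma> ((\<sigma> ^^ t) i) + k) mod p m" using S4[OF ti] .
      finally show "(\<sigma> ^^ Suc t) ((i + k) mod p m) = ((\<sigma> ^^ Suc t) i + k) mod p m" by simp
    qed
  qed
  define a1 where "a1 = r * j1"
  have tki: "(t * k) mod p m = (\<sigma> ^^ (a1 * t)) 0" for t
  proof (induction t)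
    case 0 then show ?case by simp
  next
    case (Suc t)
    have "(Suc t * k) mod p m = (t * k + k) mod p m" by (simp add: add_ac)
    also have "... = ((t * k) mod p m + k) mod p m" by (simp only: mod_add_left_eq)
    also have "... = ((\<sigma> ^^ (a1 * t)) 0 + k) mod p m" using Suc by simp
    also have "... = (\<sigma> ^^ (a1 * t)) ((0 + k) mod p m)" using itau[of "a1 * t", rule_format, OF p0] by simp
    also have "... = (\<sigma> ^^ (a1 * t)) ((\<sigma> ^^ a1) 0)" using j1 unfolding a1_def by simp
    also have "... = (\<sigma> ^^ (a1 * t + a1)) 0" by (simp only: funpow_add comp_def)
    also have "a1 * t + a1 = a1 * Suc t" by simp
    finally show ?case .
  qed
  have Np: "(\<sigma> ^^ (N * s)) 0 = 0" for s
  proof (induction s)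
    case 0 then show ?case by simp
  next
    case (Suc s)
    have e: "N * Suc s = N * s + N" by simp
    have "(\<sigma> ^^ (N * Suc s)) 0 = (\<sigma> ^^ (N * s)) ((\<sigma> ^^ N) 0)" unfolding e by (simp only: funpow_add comp_def)
    thus ?case using N(1) Suc by simp
  qed
  have "(N * k) mod p m = 0" using tki[of N] Np[of a1] by (simp add: mult.commute)
  hence "p m dvd N * k" by (simp add: mod_eq_0_iff_dvd)
  hence d: "r ^ (v + 1) dvd N * k" using rv dvd_trans by blast
  have Nk: "N * k \<noteq> 0" using N(3) k by simp
  have "v + 1 \<le> multiplicity r (N * k)" by (rule multiplicity_geI[OF Nk _ d]) (use r2 in simp)
  also have "multiplicity r (N * k) = multiplicity r N + multiplicity r k"
    by (rule prime_elem_multiplicity_mult_distrib) (use r N(3) k in auto)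
  also have "multiplicity r N = 0" using N(2) by (rule not_dvd_imp_multiplicity_0)
  finally show False unfolding v_def by simp
qed

end

lemma sv_zero:
  assumes sp: "is_scale p" and r: "prime r" and z: "scale_val r p = 0"
  shows "\<not> r dvd p n"
proof -
  have "enat (multiplicity r (p n)) \<le> scale_val r p" unfolding scale_val_def by (rule SUP_upper) simp
  hence "multiplicity r (p n) = 0" using z by (simp add: enat_0_iff(1))
  moreover have "p n \<noteq> 0" using pos[OF sp, of n] by simp
  ultimately show ?thesis using multiplicity_eq_zero_iff r by (metis not_prime_unit)
qed

lemma sv_inf:
  assumes i: "scale_val r p = \<infinity>"
  shows "\<exists>n. r ^ e dvd p n"
proof -
  have "enat e < scale_val r p" using i by simp
  then obtain n where "enat e < enat (multiplicity r (p n))" unfolding scale_val_def less_SUP_iff by blast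
  hence "e \<le> multiplicity r (p n)" by simp
  thus ?thesis using multiplicity_dvd' by blast
qed

lemma dvd_some_inf:
  assumes sp: "is_scale p" and tf: "torsion_free p" and r: "prime r" and d: "r dvd p n"
  shows "\<forall>e. \<exists>n. r ^ e dvd p n"
proof -
  have pn: "p n \<noteq> 0" using pos[OF sp, of n] by simp
  have "1 \<le> multiplicity r (p n)"
    by (rule multiplicity_geI[OF pn]) (use r d in auto)
  hence "enat 1 \<le> enat (multiplicity r (p n))" by simp
  also have "enat (multiplicity r (p n)) \<le> scale_val r p" unfolding scale_val_def by (rule SUP_upper) simp
  finally have h1: "1 \<le> scale_val r p" by (simp add: one_enat_def)
  have "scale_val r p \<noteq> 0"
  proof
    assume "scale_val r p = 0"
    thus False using h1 by simp
  qed
  hence "scale_val r p = \<infinity>" using tf r unfolding torsion_free_def by blast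
  thus ?thesis using sv_inf by blast
qed

definition primesof :: "(nat \<Rightarrow> nat) \<Rightarrow> nat set" where
  "primesof p = {r. prime r \<and> (\<exists>n. r dvd p n)}"

lemma Phi_char:
  assumes sp: "is_scale p" and tf: "torsion_free p" and r: "prime r"
  shows "Phi r (Aut_inf_group (odometer p) (odo_plus1 p)) \<longleftrightarrow> r \<notin> primesof p"
proof (cases "r \<in> primesof p")
  case True
  then obtain n where "r dvd p n" unfolding primesof_def by blast
  hence "\<forall>e. \<exists>n. r ^ e dvd p n" using dvd_some_inf sp tf r by blast
  thus ?thesis using PhiB[OF sp r] True by blast
next
  case False
  hence "\<forall>n. \<not> r dvd p n" using r unfolding primesof_def by blast
  thus ?thesis using PhiA[OF sp r] False by blast
qed

lemma X_mod_gen: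
  assumes sp: "is_scale p" and x: "x \<in> odometer p" and da: "d dvd p a" and db: "d dvd p b"
  shows "x a mod d = x b mod d"
proof -
  have gen: "x j mod d = x i mod d" if "i \<le> j" "d dvd p i" for i j
  proof -
    have "x j mod p i = x i" using X_mod[OF sp x that(1)] .
    hence "x j mod p i mod d = x i mod d" by simp
    thus ?thesis using mod_mod_cancel[OF that(2)] by simp
  qed
  show ?thesis
  proof (cases "a \<le> b")
    case True then show ?thesis using gen[OF True da] by simp
  next
    case False then show ?thesis using gen[of b a] db by simp
  qed
qed

lemma cofinal:
  assumes sp: "is_scale p" and sq: "is_scale q" and tq: "torsion_free q"
    and PP: "primesof p \<subseteq> primesof q"
  shows "\<exists>m. p n dvd q m"
proof -
  define F where "F = prime_factors (p n)"
  have pn: "p n \<noteq> 0" using pos[OF sp, of n] by simp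
  have "\<forall>r\<in>F. \<exists>m. r ^ multiplicity r (p n) dvd q m"
  proof
    fix r assume rF: "r \<in> F"
    have r: "prime r" "r dvd p n" using rF pn unfolding F_def by auto
    hence "r \<in> primesof q" using PP unfolding primesof_def by blast
    then obtain n' where "r dvd q n'" unfolding primesof_def by blast
    thus "\<exists>m. r ^ multiplicity r (p n) dvd q m" using dvd_some_inf[OF sq tq r(1)] by blast
  qed
  then obtain f where f: "\<forall>r\<in>F. r ^ multiplicity r (p n) dvd q (f r)" by metis
  define M where "M = (if F = {} then 0 else Max (f ` F))"
  have fin: "finite F" unfolding F_def by simp
  have fM: "f r \<le> M" if "r \<in> F" for r unfolding M_def using that fin by auto
  show ?thesis
  proof (intro exI multiplicity_le_imp_dvd[OF pn])
    fix r :: nat assume r: "prime r"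
    show "multiplicity r (p n) \<le> multiplicity r (q M)"
    proof (cases "r \<in> F")
      case True
      have "r ^ multiplicity r (p n) dvd q M" using f True dvd_mono[OF sq fM[OF True]] dvd_trans by blast
      moreover have "q M \<noteq> 0" using pos[OF sq, of M] by simp
      ultimately show ?thesis by (intro multiplicity_geI) (use r in auto)
    next
      case False
      hence "\<not> r dvd p n" using r pn unfolding F_def by (auto simp: in_prime_factors_iff)
      thus ?thesis by (simp add: not_dvd_imp_multiplicity_0)
    qed
  qed
qed

lemma cofinal_iso:
  assumes sp: "is_scale p" and sq: "is_scale q"
    and c1: "\<And>n. \<exists>m. q n dvd p m" and c2: "\<And>n. \<exists>m. p n dvd q m"
  shows "odo_group p \<cong> odo_group q"
proof -
  define Nf where "Nf = (\<lambda>n. SOME m. q n dvd p m)"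
  define Mf where "Mf = (\<lambda>n. SOME m. p n dvd q m)"
  have Nf: "q n dvd p (Nf n)" for n unfolding Nf_def using someI_ex[OF c1] .
  have Mf: "p n dvd q (Mf n)" for n unfolding Mf_def using someI_ex[OF c2] .
  define \<phi> where "\<phi> = (\<lambda>x. \<lambda>n. x (Nf n) mod q n)"
  define \<psi> where "\<psi> = (\<lambda>y. \<lambda>n. y (Mf n) mod p n)"
  have qS: "q n dvd q (Suc n)" for n using dvd_mono[OF sq, of n "Suc n"] by simp
  have pS: "p n dvd p (Suc n)" for n using dvd_mono[OF sp, of n "Suc n"] by simp
  have phiX: "\<phi> x \<in> odometer q" if x: "x \<in> odometer p" for x
    unfolding odometer_def
  proof (intro CollectI allI conjI)
    fix n
    show "\<phi> x n < q n" unfolding \<phi>_def using pos[OF sq] by simp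
    have "\<phi> x (Suc n) mod q n = x (Nf (Suc n)) mod q n"
      unfolding \<phi>_def using mod_mod_cancel[OF qS] by simp
    also have "... = x (Nf n) mod q n"
      by (rule X_mod_gen[OF sp x]) (use Nf qS dvd_trans in blast)+
    finally show "\<phi> x (Suc n) mod q n = \<phi> x n" unfolding \<phi>_def .
  qed
  have psiX: "\<psi> y \<in> odometer p" if y: "y \<in> odometer q" for y
    unfolding odometer_def
  proof (intro CollectI allI conjI)
    fix n
    show "\<psi> y n < p n" unfolding \<psi>_def using pos[OF sp] by simp
    have "\<psi> y (Suc n) mod p n = y (Mf (Suc n)) mod p n"
      unfolding \<psi>_def using mod_mod_cancel[OF pS] by simp
    also have "... = y (Mf n) mod p n"
      by (rule X_mod_gen[OF sq y]) (use Mf pS dvd_trans in blast)+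
    finally show "\<psi> y (Suc n) mod p n = \<psi> y n" unfolding \<psi>_def .
  qed
  have phipsi: "\<phi> (\<psi> y) = y" if y: "y \<in> odometer q" for y
  proof (rule ext)
    fix n
    have "\<phi> (\<psi> y) n = (y (Mf (Nf n)) mod p (Nf n)) mod q n" unfolding \<phi>_def \<psi>_def ..
    also have "... = y (Mf (Nf n)) mod q n" using mod_mod_cancel[OF Nf] by simp
    also have "... = y n mod q n"
      by (rule X_mod_gen[OF sq y]) (use Nf Mf dvd_trans in blast, simp)
    also have "... = y n" using X_lt[OF sq y] by simp
    finally show "\<phi> (\<psi> y) n = y n" .
  qed
  have inj: "inj_on \<phi> (odometer p)"
  proof (rule inj_onI)
    fix x y assume x: "x \<in> odometer p" and y: "y \<in> odometer p" and e: "\<phi> x = \<phi> y"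
    show "x = y"
    proof (rule ext)
      fix k
      obtain m where m: "p k dvd q m" using c2 by blast
      have d: "p k dvd p (Nf m)" using m Nf dvd_trans by blast
      have "x k = x (Nf m) mod p k" using X_mod_dvd[OF sp x d] by simp
      also have "... = (x (Nf m) mod q m) mod p k" using mod_mod_cancel[OF m] by simp
      also have "... = (y (Nf m) mod q m) mod p k" using fun_cong[OF e, of m] unfolding \<phi>_def by simp
      also have "... = y (Nf m) mod p k" using mod_mod_cancel[OF m] by simp
      also have "... = y k" using X_mod_dvd[OF sp y d] by simp
      finally show "x k = y k" .
    qed
  qed
  have img: "\<phi> ` odometer p = odometer q"
  proof
    show "\<phi> ` odometer p \<subseteq> odometer q" using phiX by blast
    show "odometer q \<subseteq> \<phi> ` odometer p"
    proof
      fix y assume y: "y \<in> odometer q"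
      hence "y = \<phi> (\<psi> y)" using phipsi by simp
      thus "y \<in> \<phi> ` odometer p" using psiX[OF y] by blast
    qed
  qed
  have hom: "\<phi> \<in> hom (odo_group p) (odo_group q)"
    unfolding hom_def odo_group_def
  proof (intro CollectI conjI ballI)
    show "\<phi> \<in> carrier \<lparr>carrier = odometer p, mult = odo_add p, one = \<lambda>n. 0\<rparr> \<rightarrow>
              carrier \<lparr>carrier = odometer q, mult = odo_add q, one = \<lambda>n. 0\<rparr>" using phiX by auto
    fix x y assume "x \<in> carrier \<lparr>carrier = odometer p, mult = odo_add p, one = \<lambda>n. 0\<rparr>"
      "y \<in> carrier \<lparr>carrier = odometer p, mult = odo_add p, one = \<lambda>n. 0\<rparr>"
    show "\<phi> (x \<otimes>\<^bsub>\<lparr>carrier = odometer p, mult = odo_add p, one = \<lambda>n. 0\<rparr>\<^esub> y) =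
          \<phi> x \<otimes>\<^bsub>\<lparr>carrier = odometer q, mult = odo_add q, one = \<lambda>n. 0\<rparr>\<^esub> \<phi> y"
    proof (simp add: odo_add_def \<phi>_def, rule ext)
      fix n
      show "(x (Nf n) + y (Nf n)) mod p (Nf n) mod q n = (x (Nf n) mod q n + y (Nf n) mod q n) mod q n"
        using mod_mod_cancel[OF Nf] by (simp add: mod_add_eq)
    qed
  qed
  show ?thesis unfolding is_iso_def iso_def
    using hom inj img by (auto simp: bij_betw_def odo_group_def)
qed

theorem theorem1p4:
  fixes p q :: "nat \<Rightarrow> nat"
  assumes "is_scale p" and "is_scale q"
    and "torsion_free p" and "torsion_free q"
    and "Aut_inf_group (odometer p) (odo_plus1 p) \<cong> Aut_inf_group (odometer q) (odo_plus1 q)"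
  shows "odo_group p \<cong> odo_group q"
proof -
  have gp: "group (Aut_inf_group (odometer p) (odo_plus1 p))" by (rule Aut_inf_group_group[OF TX[OF assms(1)]])
  have gq: "group (Aut_inf_group (odometer q) (odo_plus1 q))" by (rule Aut_inf_group_group[OF TX[OF assms(2)]])
  have iso2: "Aut_inf_group (odometer q) (odo_plus1 q) \<cong> Aut_inf_group (odometer p) (odo_plus1 p)"
    using group.iso_sym[OF gp assms(5)] .
  have PP: "primesof p = primesof q"
  proof (rule Set.set_eqI)
    fix r
    show "r \<in> primesof p \<longleftrightarrow> r \<in> primesof q"
    proof (cases "prime r")
      case True
      have "Phi r (Aut_inf_group (odometer p) (odo_plus1 p)) \<longleftrightarrow> Phi r (Aut_inf_group (odometer q) (odo_plus1 q))"
        using Phi_iso[OF gp gq assms(5)] Phi_iso[OF gq gp iso2] by blast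
      thus ?thesis using Phi_char[OF assms(1) assms(3) True] Phi_char[OF assms(2) assms(4) True] by blast
    next
      case False then show ?thesis unfolding primesof_def by blast
    qed
  qed
  show ?thesis
  proof (rule cofinal_iso[OF assms(1,2)])
    fix n
    show "\<exists>m. q n dvd p m" using cofinal[OF assms(2) assms(1) assms(3)] PP by blast
    show "\<exists>m. p n dvd q m" using cofinal[OF assms(1) assms(2) assms(4)] PP by blast
  qed
qed

end
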